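(* For each fixed $\omega\in\Omega_0^*$, the sample path $(u,v)\mapsto\dot X(u,v,\omega)$ is a three times continuously differentiable function on $\mathbb{R}\times(1/\alpha;1)$. Consequently, for all real $M,a,b$ with $M>0$ and $1/\alpha<a<b<1$ (with the convention $0/0=0$), $$\sup_{(u_1,u_2,v_1,v_2)\in[-M;M]^2\times[a;b]^2}\left\{\frac{|\dot X(u_1,v_1,\omega)-\dot X(u_2,v_2,\omega)|}{|u_1-u_2|+|v_1-v_2|}\right\}<\infty,$$ and in particular $$\sup_{(u_1,u_2,v)\in[-M;M]^2\times[a;b]}\left\{\frac{|\dot X(u_1,v,\omega)-\dot X(u_2,v,\omega)|}{|u_1-u_2|}\right\}<\infty.$$
   Context: Fix $\alpha\in(1,2)$. Let $Z_\alpha(ds)$ be an independently scattered symmetric $\alpha$-stable random measure on $\mathbb{R}$ with Lebesgue control measure on $(\Omega,\mathcal{F},\mathbb{P})$. For $x,\kappa\in\mathbb{R}$, $(x)_+^\kappa=x^\kappa$ if $x>0$ and $0$ otherwise. Let $\psi$ be a three times continuously differentiable compactly supported Daubechies mother wavelet generating an orthonormal basis of $L^2(\mathbb{R})$. For $(x,v)\in\mathbb{R}\times(1/\alpha;1)$, $\Psi(x,v)=\int_{\mathbb{R}}(x-s)_+^{v-1/\alpha}\psi(s)\,ds$; for $(j,k)\in\mathbb{Z}^2$, $\epsilon_{j,k}=2^{j/\alpha}\int_{\mathbb{R}}\psi(2^js-k)Z_\alpha(ds)$. $\Omega_0^*$ is an event of probability $1$ such that for every $\eta>0$ there is a positive finite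 random variable $C_\eta$ with $|\epsilon_{j,k}(\omega)|\le C_\eta(\omega)(3+|j|)^{1/\alpha+\eta}(3+|k|)^{1/\alpha+\eta}$ for all $\omega\in\Omega_0^*$, $(j,k)\in\mathbb{Z}^2$ (such an event exists). The low frequency part $\dot X$ is defined on $\Omega_0^*$, for $(u,v)\in\mathbb{R}\times(1/\alpha;1)$, by $\dot X(u,v)=\sum_{j=1}^{\infty}\sum_{k\in\mathbb{Z}}2^{jv}\epsilon_{-j,k}\big(\Psi(2^{-j}u-k,v)-\Psi(-k,v)\big)$ (this series converges on $\Omega_0^*$ uniformly on compact subsets of $\mathbb{R}\times(1/\alpha;1)$). One may use that all partial derivatives $\partial_x^p\partial_v^q\Psi$, $p\in\{0,1,2,3\}$, $q\in\mathbb{Z}_+$, exist, are continuous and satisfy $\sup_{(x,v)\in\mathbb{R}\times[a;b]}(3+|x|)^2|\partial_x^p\partial_v^q\Psi(x,v)|<\infty$ for every compact $[a;b]\subset(1/\alpha;1)$. *)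

theory Defs
  imports "HOL-Analysis.Analysis"
begin

definition pospow :: "real \<Rightarrow> real \<Rightarrow> real" where
  "pospow x \<kappa> = (if x > 0 then x powr \<kappa> else 0)"

definition C3_fun :: "(real \<Rightarrow> real) \<Rightarrow> bool" where
  "C3_fun f \<longleftrightarrow> (\<forall>k<3. \<forall>x. ((deriv ^^ k) f) differentiable (at x))
                 \<and> continuous_on UNIV ((deriv ^^ 3) f)"

definition pdx :: "(real \<times> real \<Rightarrow> real) \<Rightarrow> real \<times> real \<Rightarrow> real" where
  "pdx f = (\<lambda>(x, v). deriv (\<lambda>y. f (y, v)) x)"

definition pdv :: "(real \<times> real \<Rightarrow> real) \<Rightarrow> real \<times> real \<Rightarrow> real" where
  "pdv f = (\<lambda>(x, v). deriv (\<lambda>w. f (x, w)) v)"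

definition mpd :: "nat \<Rightarrow> nat \<Rightarrow> (real \<times> real \<Rightarrow> real) \<Rightarrow> real \<times> real \<Rightarrow> real" where
  "mpd p q f = (pdx ^^ p) ((pdv ^^ q) f)"

definition C3_on2 :: "(real \<times> real) set \<Rightarrow> (real \<times> real \<Rightarrow> real) \<Rightarrow> bool" where
  "C3_on2 S f \<longleftrightarrow>
     (\<forall>p q. p + q < 3 \<longrightarrow> (\<forall>z\<in>S. mpd p q f differentiable (at z)))
   \<and> (\<forall>p q. p + q \<le> 3 \<longrightarrow> continuous_on S (mpd p q f))"

definition wav :: "(real \<Rightarrow> real) \<Rightarrow> int \<Rightarrow> int \<Rightarrow> real \<Rightarrow> real" where
  "wav \<psi> j k s = 2 powr (real_of_int j / 2) * \<psi> (2 powr (real_of_int j) * s - real_of_int k)"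

definition wavelet_ONB :: "(real \<Rightarrow> real) \<Rightarrow> bool" where
  "wavelet_ONB \<psi> \<longleftrightarrow>
     \<psi> \<in> borel_measurable lborel
   \<and> (\<forall>j k j' k'. integrable lborel (\<lambda>s. wav \<psi> j k s * wav \<psi> j' k' s)
        \<and> (LINT s|lborel. wav \<psi> j k s * wav \<psi> j' k' s) = (if (j, k) = (j', k') then 1 else 0))
   \<and> (\<forall>f::real \<Rightarrow> real. f \<in> borel_measurable lborel \<longrightarrow> integrable lborel (\<lambda>s. (f s)\<^sup>2) \<longrightarrow>
        (\<forall>j k. (LINT s|lborel. f s * wav \<psi> j k s) = 0) \<longrightarrow> (AE s in lborel. f s = 0))"

definition Psi :: "real \<Rightarrow> (real \<Rightarrow> real) \<Rightarrow> real \<times> real \<Rightarrow> real" where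
  "Psi \<alpha> \<psi> = (\<lambda>(x, v). LINT s|lborel. pospow (x - s) (v - 1 / \<alpha>) * \<psi> s)"

text \<open>The low frequency part, evaluated at a fixed omega, where eps j k stands for
  epsilon_{j,k}(omega).  The outer sum is over j = 1, 2, ... (index Suc n), the inner over k in Z.\<close>
definition Xdot :: "real \<Rightarrow> (real \<Rightarrow> real) \<Rightarrow> (int \<Rightarrow> int \<Rightarrow> real) \<Rightarrow> real \<times> real \<Rightarrow> real" where
  "Xdot \<alpha> \<psi> eps = (\<lambda>(u, v). \<Sum>n. let j = Suc n in
      (\<Sum>\<^sub>\<infinity>k\<in>(UNIV::int set). 2 powr (real j * v) * eps (- int j) k *
         (Psi \<alpha> \<psi> (u / 2 ^ j - real_of_int k, v) - Psi \<alpha> \<psi> (- real_of_int k, v))))"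

end

theory Submission
  imports Defs
begin


lemma mvt_between:
  fixes f f' :: "real \<Rightarrow> real"
  assumes "\<And>t. min a b \<le> t \<Longrightarrow> t \<le> max a b \<Longrightarrow> (f has_real_derivative f' t) (at t)"
  shows "\<exists>t. min a b \<le> t \<and> t \<le> max a b \<and> f b - f a = (b - a) * f' t"
proof (cases a b rule: linorder_cases)
  case less
  then obtain z where "a < z" "z < b" "f b - f a = (b - a) * f' z"
    using MVT2[of a b f f'] assms by auto
  then show ?thesis using less by (intro exI[of _ z]) auto
next
  case equal then show ?thesis by (intro exI[of _ a]) auto
next
  case greater
  then obtain z where "b < z" "z < a" "f a - f b = (a - b) * f' z"
    using MVT2[of b a f f'] assms by auto
  then show ?thesis using greater by (intro exI[of _ z]) (auto simp: algebra_simps)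
qed

lemma dist_pair_mono:
  fixes t x u w v :: real
  assumes "\<bar>t - x\<bar> \<le> \<bar>u - x\<bar>"
  shows "dist (t,w) (x,v) \<le> dist (u,w) (x,v)"
proof -
  have "(t - x)\<^sup>2 \<le> (u - x)\<^sup>2" using assms by (simp add: abs_le_square_iff)
  then show ?thesis by (simp add: dist_Pair_Pair dist_real_def)
qed

lemma frechet_weak:
  fixes g :: "real \<times> real \<Rightarrow> real"
  assumes S: "open S" "(x,v) \<in> S"
  and dx: "\<And>y w. (y,w) \<in> S \<Longrightarrow> ((\<lambda>t. g (t,w)) has_real_derivative Dx (y,w)) (at y)"
  and cont: "continuous (at (x,v)) Dx"
  and dv: "((\<lambda>w. g (x,w)) has_real_derivative Dv) (at v)"
  shows "(g has_derivative (\<lambda>(h,k). h * Dx (x,v) + k * Dv)) (at (x,v))"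
  unfolding has_derivative_at_alt
proof (intro conjI allI impI)
  show "bounded_linear (\<lambda>(h::real, k::real). h * Dx (x, v) + k * Dv)"
    by (auto intro!: bounded_linear_intros simp: case_prod_unfold)
  fix e :: real assume e: "e > 0"
  obtain d1 where d1: "d1 > 0" "ball (x,v) d1 \<subseteq> S"
    using S open_contains_ball by blast
  obtain d2 where d2: "d2 > 0" "\<And>z. dist z (x,v) < d2 \<Longrightarrow> dist (Dx z) (Dx (x,v)) < e/2"
    using cont e unfolding continuous_at_eps_delta by (metis half_gt_zero)
  have "((\<lambda>w. g (x,w)) has_derivative (\<lambda>k. Dv * k)) (at v)"
    using dv by (simp add: has_field_derivative_def)
  then obtain d3 where d3: "d3 > 0" "\<And>w. norm (w - v) < d3 \<Longrightarrow>
      norm (g (x,w) - g (x,v) - Dv * (w - v)) \<le> e/2 * norm (w - v)"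
    unfolding has_derivative_at_alt using e by (metis half_gt_zero)
  define d where "d = min d1 (min d2 d3)"
  have "d > 0" using d1 d2 d3 by (simp add: d_def)
  show "\<exists>d>0. \<forall>y. norm (y - (x, v)) < d \<longrightarrow>
      norm (g y - g (x, v) - (case y - (x, v) of (h, k) \<Rightarrow> h * Dx (x, v) + k * Dv))
        \<le> e * norm (y - (x, v))"
  proof (intro exI[of _ d] conjI allI impI \<open>d > 0\<close>)
    fix y :: "real \<times> real"
    assume y: "norm (y - (x,v)) < d"
    obtain u w where yuw: "y = (u,w)" by fastforce
    have hu: "\<bar>u - x\<bar> \<le> norm (y - (x,v))" and hw: "\<bar>w - v\<bar> \<le> norm (y - (x,v))"
      using norm_fst_le[of "u - x" "w - v"] norm_snd_le[of "w - v" "u - x"] by (auto simp: yuw)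
    have "\<exists>t. min x u \<le> t \<and> t \<le> max x u \<and> g (u,w) - g (x,w) = (u - x) * Dx (t,w)"
    proof (rule mvt_between)
      fix t assume t: "min x u \<le> t" "t \<le> max x u"
      have "dist (t,w) (x,v) \<le> norm (y - (x,v))"
      proof -
        have "\<bar>t - x\<bar> \<le> \<bar>u - x\<bar>" using t by (cases "x \<le> u") (auto simp: min_def max_def)
        then show ?thesis using dist_pair_mono[of t x u w v] by (simp add: yuw dist_norm)
      qed
      then have "dist (x,v) (t,w) < d1" using y unfolding d_def by (simp add: dist_commute)
      then have "(t,w) \<in> S" using d1 by auto
      then show "((\<lambda>t. g (t,w)) has_real_derivative Dx (t,w)) (at t)" by (rule dx)
    qed
    then obtain t where t: "min x u \<le> t" "t \<le> max x u" "g (u,w) - g (x,w) = (u - x) * Dx (t,w)"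
      by blast
    have "dist (t,w) (x,v) \<le> norm (y - (x,v))"
    proof -
      have "\<bar>t - x\<bar> \<le> \<bar>u - x\<bar>" using t by (cases "x \<le> u") (auto simp: min_def max_def)
      then show ?thesis using dist_pair_mono[of t x u w v] by (simp add: yuw dist_norm)
    qed
    then have "dist (Dx (t,w)) (Dx (x,v)) < e/2" using d2 y unfolding d_def by auto
    then have A0: "\<bar>Dx (t,w) - Dx (x,v)\<bar> \<le> e/2" by (simp add: dist_real_def)
    have A1: "g (u,w) - g (x,w) - (u - x) * Dx (x,v) = (u - x) * (Dx (t,w) - Dx (x,v))"
      using t(3) by (simp add: algebra_simps)
    have A: "\<bar>g (u,w) - g (x,w) - (u - x) * Dx (x,v)\<bar> \<le> e/2 * \<bar>u - x\<bar>"
      unfolding A1 abs_mult using A0 mult_left_mono[OF A0, of "\<bar>u - x\<bar>"] by (simp add: mult.commute)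
    have B: "\<bar>g (x,w) - g (x,v) - (w - v) * Dv\<bar> \<le> e/2 * \<bar>w - v\<bar>"
      using d3(2)[of w] hw y unfolding d_def by (auto simp: mult.commute)
    have "\<bar>g (u,w) - g (x,v) - ((u - x) * Dx (x,v) + (w - v) * Dv)\<bar> \<le> e/2 * \<bar>u - x\<bar> + e/2 * \<bar>w - v\<bar>"
      using A B by linarith
    also have "\<dots> \<le> e/2 * norm (y - (x,v)) + e/2 * norm (y - (x,v))"
      using hu hw e by (intro add_mono mult_left_mono) auto
    finally show "norm (g y - g (x, v) - (case y - (x, v) of (h, k) \<Rightarrow> h * Dx (x, v) + k * Dv))
        \<le> e * norm (y - (x, v))" by (simp add: yuw)
  qed
qed

lemma dist_pair_le_sum:
  fixes a b c d :: real
  shows "dist (a,b) (c,d) \<le> \<bar>a - c\<bar> + \<bar>b - d\<bar>"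
  using norm_Pair_le[of "a - c" "b - d"] by (simp add: dist_norm)

lemma schwarz:
  fixes g :: "real \<times> real \<Rightarrow> real"
  assumes S: "open S" "(x,v) \<in> S"
  and dv: "\<And>y w. (y,w) \<in> S \<Longrightarrow> ((\<lambda>w'. g (y,w')) has_real_derivative Dv (y,w)) (at w)"
  and dvx: "\<And>y w. (y,w) \<in> S \<Longrightarrow> ((\<lambda>t. Dv (t,w)) has_real_derivative E (y,w)) (at y)"
  and contE: "continuous (at (x,v)) E"
  and dx: "\<And>y w. (y,w) \<in> S \<Longrightarrow> ((\<lambda>t. g (t,w)) has_real_derivative Dx (y,w)) (at y)"
  shows "((\<lambda>w. Dx (x,w)) has_real_derivative E (x,v)) (at v)"
proof -
  have "((\<lambda>w. Dx (x,w)) has_derivative (\<lambda>k. E (x,v) * k)) (at v)"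
    unfolding has_derivative_at_alt
  proof (intro conjI allI impI)
    show "bounded_linear (\<lambda>k. E (x,v) * k)" by (rule bounded_linear_mult_right)
    fix e :: real assume e: "e > 0"
    obtain d1 where d1: "d1 > 0" "ball (x,v) d1 \<subseteq> S"
      using S open_contains_ball by blast
    obtain d2 where d2: "d2 > 0" "\<And>z. dist z (x,v) < d2 \<Longrightarrow> dist (E z) (E (x,v)) < e/2"
      using contE e unfolding continuous_at_eps_delta by (metis half_gt_zero)
    define d where "d = min d1 d2 / 2"
    have d: "d > 0" "2 * d \<le> d1" "2 * d \<le> d2" using d1 d2 by (auto simp: d_def)
    have inS: "(a,b) \<in> S" if "\<bar>a - x\<bar> < d" "\<bar>b - v\<bar> < d" for a b
    proof -
      have "dist (x,v) (a,b) < d1"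
        using dist_pair_le_sum[of a b x v] that d by (simp add: dist_commute)
      then show ?thesis using d1 by auto
    qed
    have Eclose: "\<bar>E (a,b) - E (x,v)\<bar> < e/2" if "\<bar>a - x\<bar> < d" "\<bar>b - v\<bar> < d" for a b
    proof -
      have "dist (a,b) (x,v) < d2"
        using dist_pair_le_sum[of a b x v] that d by simp
      then show ?thesis using d2 by (simp add: dist_real_def)
    qed
    show "\<exists>d>0. \<forall>w. norm (w - v) < d \<longrightarrow>
        norm (Dx (x, w) - Dx (x, v) - E (x, v) * (w - v)) \<le> e * norm (w - v)"
    proof (intro exI[of _ d] conjI allI impI \<open>d > 0\<close>)
      fix w :: real assume w: "norm (w - v) < d"
      define k where "k = w - v"
      have k: "\<bar>k\<bar> < d" using w by (simp add: k_def)
      define \<Delta> where "\<Delta> h = g (x+h,w) - g (x+h,v) - g (x,w) + g (x,v)" for h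
      have main: "\<bar>\<Delta> h - h * k * E (x,v)\<bar> \<le> e/2 * \<bar>h\<bar> * \<bar>k\<bar>" if h: "\<bar>h\<bar> < d" for h
      proof -
        have "\<exists>s. min v w \<le> s \<and> s \<le> max v w \<and>
            (g (x+h,w) - g (x,w)) - (g (x+h,v) - g (x,v)) = (w - v) * (Dv (x+h,s) - Dv (x,s))"
        proof (rule mvt_between[where f = "\<lambda>s. g (x+h,s) - g (x,s)"])
          fix s assume s: "min v w \<le> s" "s \<le> max v w"
          then have sv: "\<bar>s - v\<bar> < d" using k unfolding k_def by (auto simp: min_def max_def split: if_splits)
          show "((\<lambda>s. g (x+h,s) - g (x,s)) has_real_derivative Dv (x+h,s) - Dv (x,s)) (at s)"
            by (intro DERIV_diff dv inS) (use h sv in auto)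
        qed
        then obtain s where s: "min v w \<le> s" "s \<le> max v w"
          "(g (x+h,w) - g (x,w)) - (g (x+h,v) - g (x,v)) = (w - v) * (Dv (x+h,s) - Dv (x,s))"
          by blast
        have sv: "\<bar>s - v\<bar> < d" using s k unfolding k_def by (auto simp: min_def max_def split: if_splits)
        have "\<exists>t. min x (x+h) \<le> t \<and> t \<le> max x (x+h) \<and> Dv (x+h,s) - Dv (x,s) = (x + h - x) * E (t,s)"
        proof (rule mvt_between[where f = "\<lambda>t. Dv (t,s)"])
          fix t assume t: "min x (x+h) \<le> t" "t \<le> max x (x+h)"
          then have "\<bar>t - x\<bar> < d" using h by (auto simp: min_def max_def split: if_splits)
          then show "((\<lambda>t. Dv (t,s)) has_real_derivative E (t,s)) (at t)"
            by (intro dvx inS sv)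
        qed
        then obtain t where t: "min x (x+h) \<le> t" "t \<le> max x (x+h)" "Dv (x+h,s) - Dv (x,s) = h * E (t,s)"
          by auto
        have tx: "\<bar>t - x\<bar> < d" using t h by (auto simp: min_def max_def split: if_splits)
        have eq: "\<Delta> h - h * k * E (x,v) = h * k * (E (t,s) - E (x,v))"
          using s(3) t(3) unfolding \<Delta>_def k_def by (simp add: algebra_simps)
        have "\<bar>E (t,s) - E (x,v)\<bar> \<le> e/2" using Eclose[OF tx sv] by simp
        then have "\<bar>h * k\<bar> * \<bar>E (t,s) - E (x,v)\<bar> \<le> \<bar>h * k\<bar> * (e/2)"
          by (intro mult_left_mono) auto
        then show ?thesis unfolding eq abs_mult by (simp add: algebra_simps)
      qed
      have lim: "((\<lambda>h. \<Delta> h / h) \<longlongrightarrow> Dx (x,w) - Dx (x,v)) (at 0)"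
      proof -
        have A: "((\<lambda>h. (g (x+h,w) - g (x,w)) / h) \<longlongrightarrow> Dx (x,w)) (at 0)"
          using dx[OF inS[of x w]] d k unfolding DERIV_def k_def by simp
        have B: "((\<lambda>h. (g (x+h,v) - g (x,v)) / h) \<longlongrightarrow> Dx (x,v)) (at 0)"
          using dx[OF inS[of x v]] d unfolding DERIV_def by simp
        have "\<Delta> h / h = (g (x+h,w) - g (x,w)) / h - (g (x+h,v) - g (x,v)) / h" for h
          unfolding \<Delta>_def by (simp add: diff_divide_distrib add_divide_distrib)
        then show ?thesis using tendsto_diff[OF A B] by simp
      qed
      then have lim2: "((\<lambda>h. \<bar>\<Delta> h / h - k * E (x,v)\<bar>) \<longlongrightarrow> \<bar>Dx (x,w) - Dx (x,v) - k * E (x,v)\<bar>) (at 0)"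
        by (intro tendsto_intros)
      have ev: "eventually (\<lambda>h. \<bar>\<Delta> h / h - k * E (x,v)\<bar> \<le> e/2 * \<bar>k\<bar>) (at (0::real))"
        unfolding eventually_at
      proof (intro exI[of _ d] conjI ballI impI \<open>d > 0\<close>)
        fix h :: real assume "h \<in> UNIV" and h: "h \<noteq> 0 \<and> dist h 0 < d"
        have "\<bar>\<Delta> h / h - k * E (x,v)\<bar> = \<bar>\<Delta> h - h * k * E (x,v)\<bar> / \<bar>h\<bar>"
          using h by (simp add: field_simps flip: abs_divide)
        also have "\<dots> \<le> e/2 * \<bar>h\<bar> * \<bar>k\<bar> / \<bar>h\<bar>"
          using main[of h] h by (intro divide_right_mono) auto
        also have "\<dots> = e/2 * \<bar>k\<bar>" using h by simp
        finally show "\<bar>\<Delta> h / h - k * E (x,v)\<bar> \<le> e/2 * \<bar>k\<bar>" .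
      qed
      have "\<bar>Dx (x,w) - Dx (x,v) - k * E (x,v)\<bar> \<le> e/2 * \<bar>k\<bar>"
        by (rule tendsto_upperbound[OF lim2 ev]) simp
      also have "\<dots> \<le> e * \<bar>k\<bar>" using e by (simp add: mult_right_mono)
      finally show "norm (Dx (x, w) - Dx (x, v) - E (x, v) * (w - v)) \<le> e * norm (w - v)"
        by (simp add: k_def mult.commute)
    qed
  qed
  then show ?thesis by (simp add: has_field_derivative_def)
qed

definition abc :: "real \<Rightarrow> real \<Rightarrow> (real \<times> real \<Rightarrow> real) \<Rightarrow> bool" where
  "abc A B g \<longleftrightarrow>
    (\<forall>p q x v. p + q < 3 \<longrightarrow> A < v \<longrightarrow> v < B \<longrightarrow>
       ((\<lambda>y. mpd p q g (y,v)) has_real_derivative mpd (Suc p) q g (x,v)) (at x)) \<and>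
    (\<forall>q x v. q < 3 \<longrightarrow> A < v \<longrightarrow> v < B \<longrightarrow>
       ((\<lambda>w. mpd 0 q g (x,w)) has_real_derivative mpd 0 (Suc q) g (x,v)) (at v)) \<and>
    (\<forall>p q. p + q \<le> 3 \<longrightarrow> continuous_on (UNIV \<times> {A<..<B}) (mpd p q g))"

lemma mpd_Suc_x: "mpd (Suc p) q g = pdx (mpd p q g)"
  by (simp add: mpd_def)

lemma mpd_Suc_v: "mpd 0 (Suc q) g = pdv (mpd 0 q g)"
  by (simp add: mpd_def)

lemma mpd_0_0[simp]: "mpd 0 0 g = g"
  by (simp add: mpd_def)

lemma open_strip: "open (UNIV \<times> {A<..<B::real} :: (real \<times> real) set)"
  by (intro open_Times) auto

lemma abc_a:
  "abc A B g \<Longrightarrow> p + q < 3 \<Longrightarrow> A < v \<Longrightarrow> v < B \<Longrightarrow>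
     ((\<lambda>y. mpd p q g (y,v)) has_real_derivative mpd (Suc p) q g (x,v)) (at x)"
  unfolding abc_def by blast

lemma abc_b:
  "abc A B g \<Longrightarrow> q < 3 \<Longrightarrow> A < v \<Longrightarrow> v < B \<Longrightarrow>
     ((\<lambda>w. mpd 0 q g (x,w)) has_real_derivative mpd 0 (Suc q) g (x,v)) (at v)"
  unfolding abc_def by blast

lemma abc_c:
  "abc A B g \<Longrightarrow> p + q \<le> 3 \<Longrightarrow> continuous_on (UNIV \<times> {A<..<B}) (mpd p q g)"
  unfolding abc_def by blast

lemma strip_isCont:
  fixes A B x v :: real and f :: "real \<times> real \<Rightarrow> 'a::topological_space"
  assumes "continuous_on (UNIV \<times> {A<..<B}) f" "A < v" "v < B"
  shows "isCont f (x,v)"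
  using assms open_strip[of A B] continuous_on_eq_continuous_at by fastforce

lemma abc_dv:
  assumes "abc A B g" "p + q < 3" "A < v" "v < B"
  shows "((\<lambda>w. mpd p q g (x,w)) has_real_derivative mpd p (Suc q) g (x,v)) (at v)"
  using assms(2-4)
proof (induction p arbitrary: q x v)
  case 0
  then show ?case using abc_b[OF assms(1)] by simp
next
  case (Suc p)
  let ?S = "UNIV \<times> {A<..<B} :: (real \<times> real) set"
  have c: "continuous_on ?S (mpd (Suc p) (Suc q) g)"
    using abc_c[OF assms(1), of "Suc p" "Suc q"] Suc.prems by simp
  show ?case
  proof (rule schwarz[where S = ?S and g = "mpd p q g" and Dv = "mpd p (Suc q) g"])
    show "open ?S" by (rule open_strip)
    show "(x,v) \<in> ?S" using Suc.prems by simp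
    show "((\<lambda>w'. mpd p q g (y, w')) has_real_derivative mpd p (Suc q) g (y, w)) (at w)"
      if "(y,w) \<in> ?S" for y w using Suc.IH[of q w y] Suc.prems that by simp
    show "((\<lambda>t. mpd p (Suc q) g (t, w)) has_real_derivative mpd (Suc p) (Suc q) g (y, w)) (at y)"
      if "(y,w) \<in> ?S" for y w using abc_a[OF assms(1), of p "Suc q" w y] Suc.prems that by simp
    show "isCont (mpd (Suc p) (Suc q) g) (x, v)"
      using strip_isCont[OF c] Suc.prems by simp
    show "((\<lambda>t. mpd p q g (t, w)) has_real_derivative mpd (Suc p) q g (y, w)) (at y)"
      if "(y,w) \<in> ?S" for y w using abc_a[OF assms(1), of p q w y] Suc.prems that by simp
  qed
qed

lemma abc_C3:
  assumes "abc A B g"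
  shows "C3_on2 (UNIV \<times> {A<..<B}) g"
  unfolding C3_on2_def
proof (intro conjI allI impI ballI)
  fix p q :: nat
  assume pq: "p + q \<le> 3"
  then show "continuous_on (UNIV \<times> {A<..<B}) (mpd p q g)" using abc_c[OF assms] by simp
next
  let ?S = "UNIV \<times> {A<..<B} :: (real \<times> real) set"
  fix p q :: nat and z assume pq: "p + q < 3" and z: "z \<in> ?S"
  obtain x v where zxv: "z = (x,v)" by fastforce
  have v: "A < v" "v < B" using z zxv by auto
  have c: "continuous_on ?S (mpd (Suc p) q g)"
    using abc_c[OF assms, of "Suc p" q] pq by simp
  have "(mpd p q g has_derivative (\<lambda>(h,k). h * mpd (Suc p) q g (x,v) + k * mpd p (Suc q) g (x,v))) (at (x,v))"
  proof (rule frechet_weak[where S = ?S])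
    show "open ?S" by (rule open_strip)
    show "(x,v) \<in> ?S" using v by simp
    show "((\<lambda>t. mpd p q g (t, w)) has_real_derivative mpd (Suc p) q g (y, w)) (at y)"
      if "(y,w) \<in> ?S" for y w using abc_a[OF assms pq, of w y] that by simp
    show "isCont (mpd (Suc p) q g) (x, v)"
      using strip_isCont[OF c v] .
    show "((\<lambda>w. mpd p q g (x, w)) has_real_derivative mpd p (Suc q) g (x, v)) (at v)"
      using abc_dv[OF assms pq v] .
  qed
  then show "mpd p q g differentiable at z" unfolding zxv differentiable_def by blast
qed

context
  fixes A B :: real and g :: "nat \<Rightarrow> real \<times> real \<Rightarrow> real"
  assumes abc: "\<And>m. abc A B (g m)"
  and bnd: "\<And>M a b. A < a \<Longrightarrow> a \<le> b \<Longrightarrow> b < B \<Longrightarrow> \<exists>Bd. summable Bd \<and>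
        (\<forall>m p q u v. p + q \<le> 3 \<longrightarrow> \<bar>u\<bar> \<le> M \<longrightarrow> a \<le> v \<longrightarrow> v \<le> b \<longrightarrow>
            \<bar>mpd p q (g m) (u,v)\<bar> \<le> Bd m)"
begin

definition SM where "SM p q z = (\<Sum>m. mpd p q (g m) z)"

lemma ser_x:
  assumes pq: "p + q < 3" and v: "A < v" "v < B"
  shows "((\<lambda>y. SM p q (y,v)) has_real_derivative SM (Suc p) q (x,v)) (at x)"
proof -
  obtain Bd where Bd1: "summable Bd" and Bd2: "\<forall>m p q u w. p + q \<le> 3 \<longrightarrow> \<bar>u\<bar> \<le> \<bar>x\<bar> + 1 \<longrightarrow> v \<le> w \<longrightarrow> w \<le> v \<longrightarrow>
            \<bar>mpd p q (g m) (u,w)\<bar> \<le> Bd m"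
    using bnd[of v v "\<bar>x\<bar> + 1"] v by blast
  let ?T = "{x - 1 .. x + 1}"
  have c1: "convex ?T" by simp
  have c2: "((\<lambda>y. mpd p q (g n) (y,v)) has_field_derivative mpd (Suc p) q (g n) (y,v)) (at y within ?T)"
    for n y using abc_a[OF abc pq v] by (rule has_field_derivative_at_within)
  have c3: "uniformly_convergent_on ?T (\<lambda>n y. \<Sum>i<n. mpd (Suc p) q (g i) (y,v))"
  proof (rule Weierstrass_m_test'[OF _ Bd1])
    fix n y assume "y \<in> ?T"
    then have "\<bar>y\<bar> \<le> \<bar>x\<bar> + 1" by auto
    then show "norm (mpd (Suc p) q (g n) (y,v)) \<le> Bd n" using Bd2 pq by simp
  qed
  have c4: "x \<in> ?T" by simp
  have c6: "x \<in> interior ?T" by simp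
  have c5: "summable (\<lambda>n. mpd p q (g n) (x,v))"
  proof (rule summable_comparison_test[OF _ Bd1])
    show "\<exists>N. \<forall>n\<ge>N. norm (mpd p q (g n) (x,v)) \<le> Bd n" using Bd2 pq by simp
  qed
  have "((\<lambda>y. \<Sum>n. mpd p q (g n) (y,v)) has_field_derivative (\<Sum>n. mpd (Suc p) q (g n) (x,v))) (at x)"
    by (rule has_field_derivative_series'(2)[OF c1 c2 c3 c4 c5 c6])
  then show ?thesis unfolding SM_def .
qed

lemma ser_v:
  assumes q: "q < 3" and v: "A < v" "v < B"
  shows "((\<lambda>w. SM 0 q (x,w)) has_real_derivative SM 0 (Suc q) (x,v)) (at v)"
proof -
  define a where "a = (A + v) / 2"
  define b where "b = (v + B) / 2"
  have ab: "A < a" "a < v" "v < b" "b < B" using v by (auto simp: a_def b_def)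
  obtain Bd where Bd1: "summable Bd" and Bd2: "\<forall>m p q u w. p + q \<le> 3 \<longrightarrow> \<bar>u\<bar> \<le> \<bar>x\<bar> \<longrightarrow> a \<le> w \<longrightarrow> w \<le> b \<longrightarrow>
          \<bar>mpd p q (g m) (u,w)\<bar> \<le> Bd m"
    using bnd[of a b "\<bar>x\<bar>"] ab by fastforce
  let ?T = "{a .. b}"
  have c1: "convex ?T" by simp
  have c2: "((\<lambda>w. mpd 0 q (g n) (x,w)) has_field_derivative mpd 0 (Suc q) (g n) (x,w)) (at w within ?T)"
    if "w \<in> ?T" for n w
  proof -
    have "A < w" "w < B" using that ab by auto
    then show ?thesis using abc_b[OF abc[of n] q, where v=w and x=x] by (rule_tac has_field_derivative_at_within) simp
  qed
  have c3: "uniformly_convergent_on ?T (\<lambda>n w. \<Sum>i<n. mpd 0 (Suc q) (g i) (x,w))"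
  proof (rule Weierstrass_m_test'[OF _ Bd1])
    fix n w assume "w \<in> ?T"
    then show "norm (mpd 0 (Suc q) (g n) (x,w)) \<le> Bd n" using Bd2 q by simp
  qed
  have c4: "v \<in> ?T" using ab by simp
  have c6: "v \<in> interior ?T" using ab by simp
  have c5: "summable (\<lambda>n. mpd 0 q (g n) (x,v))"
  proof (rule summable_comparison_test[OF _ Bd1])
    show "\<exists>N. \<forall>n\<ge>N. norm (mpd 0 q (g n) (x,v)) \<le> Bd n" using Bd2 q ab by simp
  qed
  have "((\<lambda>w. \<Sum>n. mpd 0 q (g n) (x,w)) has_field_derivative (\<Sum>n. mpd 0 (Suc q) (g n) (x,v))) (at v)"
    by (rule has_field_derivative_series'(2)[OF c1 c2 c3 c4 c5 c6])
  then show ?thesis unfolding SM_def .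
qed

lemma ser_cont:
  assumes pq: "p + q \<le> 3"
  shows "continuous_on (UNIV \<times> {A<..<B}) (SM p q)"
proof -
  define R where "R = (\<lambda>(M::real,a::real,b::real). {-M<..<M} \<times> {a<..<b})"
  define I where "I = {(M::real,a,b). 0 < M \<and> A < a \<and> a < b \<and> b < B}"
  have "continuous_on (\<Union>i\<in>I. R i) (SM p q)"
  proof (rule continuous_on_open_UN)
    fix i assume i: "i \<in> I"
    obtain M a b where iMab: "i = (M,a,b)" by (cases i) auto
    have Mab: "0 < M" "A < a" "a < b" "b < B" using i iMab by (auto simp: I_def)
    have Ri: "R i = {-M<..<M} \<times> {a<..<b}" by (simp add: R_def iMab)
    show "open (R i)" unfolding Ri by (auto intro!: open_Times)
    obtain Bd where Bd1: "summable Bd" and Bd2: "\<forall>m p q u w. p + q \<le> 3 \<longrightarrow> \<bar>u\<bar> \<le> M \<longrightarrow> a \<le> w \<longrightarrow> w \<le> b \<longrightarrow>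
          \<bar>mpd p q (g m) (u,w)\<bar> \<le> Bd m"
      using bnd[of a b M] Mab by fastforce
    have ul: "uniform_limit (R i) (\<lambda>n z. \<Sum>m<n. mpd p q (g m) z) (\<lambda>z. \<Sum>m. mpd p q (g m) z) sequentially"
    proof (rule Weierstrass_m_test[OF _ Bd1])
      fix n z assume "z \<in> R i"
      then obtain u w where "z = (u,w)" "\<bar>u\<bar> \<le> M" "a \<le> w" "w \<le> b"
        unfolding Ri by force
      then show "norm (mpd p q (g n) z) \<le> Bd n" using Bd2 pq by simp
    qed
    have sub: "R i \<subseteq> UNIV \<times> {A<..<B}" unfolding Ri using Mab by auto
    have cs: "continuous_on (R i) (\<lambda>z. \<Sum>m<n. mpd p q (g m) z)" for n
      by (intro continuous_on_sum continuous_on_subset[OF abc_c[OF abc pq] sub])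
    show "continuous_on (R i) (SM p q)"
      unfolding SM_def[abs_def]
      by (rule uniform_limit_theorem[OF _ ul]) (use cs in simp_all)
  qed
  moreover have "(\<Union>i\<in>I. R i) = UNIV \<times> {A<..<B}"
  proof (rule set_eqI)
    fix z :: "real \<times> real"
    obtain u w where z: "z = (u,w)" by force
    show "z \<in> (\<Union>i\<in>I. R i) \<longleftrightarrow> z \<in> UNIV \<times> {A<..<B}"
    proof
      assume "z \<in> (\<Union>i\<in>I. R i)"
      then obtain M a b where "(M,a,b) \<in> I" "z \<in> R (M,a,b)" by force
      then show "z \<in> UNIV \<times> {A<..<B}" unfolding I_def R_def z by auto
    next
      assume "z \<in> UNIV \<times> {A<..<B}"
      then have "(u,w) \<in> R (\<bar>u\<bar> + 1, (A + w)/2, (w + B)/2)" "(\<bar>u\<bar> + 1, (A + w)/2, (w + B)/2) \<in> I"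
        unfolding R_def I_def z by auto
      then show "z \<in> (\<Union>i\<in>I. R i)" unfolding z by blast
    qed
  qed
  ultimately show ?thesis by simp
qed

lemma ser_E:
  fixes F :: "real \<times> real \<Rightarrow> real"
  assumes F: "\<And>u v. A < v \<Longrightarrow> v < B \<Longrightarrow> F (u,v) = (\<Sum>m. g m (u,v))"
  assumes pq: "p + q \<le> 3" and v: "A < v" "v < B"
  shows "mpd p q F (x,v) = SM p q (x,v)"
proof -
  have E0: "\<forall>x v. A < v \<longrightarrow> v < B \<longrightarrow> mpd 0 q F (x,v) = SM 0 q (x,v)" if "q \<le> 3" for q
    using that
  proof (induction q)
    case 0
    then show ?case using F by (simp add: SM_def)
  next
    case (Suc q)
    have IH: "\<And>x v. A < v \<Longrightarrow> v < B \<Longrightarrow> mpd 0 q F (x,v) = SM 0 q (x,v)"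
      using Suc by simp
    show ?case
    proof (intro allI impI)
      fix x v :: real assume v: "A < v" "v < B"
      have "mpd 0 (Suc q) F (x,v) = deriv (\<lambda>w. mpd 0 q F (x,w)) v"
        by (simp add: mpd_Suc_v pdv_def)
      also have "\<dots> = deriv (\<lambda>w. SM 0 q (x,w)) v"
      proof (rule deriv_cong_ev[OF _ refl])
        have "eventually (\<lambda>w. w \<in> {A<..<B}) (nhds v)"
          using v by (intro eventually_nhds_in_open) auto
        then show "\<forall>\<^sub>F w in nhds v. mpd 0 q F (x, w) = SM 0 q (x, w)"
          by eventually_elim (use IH in simp)
      qed
      also have "\<dots> = SM 0 (Suc q) (x,v)"
        using ser_v[of q v x] Suc.prems v by (intro DERIV_imp_deriv) simp
      finally show "mpd 0 (Suc q) F (x,v) = SM 0 (Suc q) (x,v)" .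
    qed
  qed
  have E: "\<forall>x v. A < v \<longrightarrow> v < B \<longrightarrow> mpd p q F (x,v) = SM p q (x,v)" if "p + q \<le> 3" for p :: nat
    using that
  proof (induction p)
    case 0
    then show ?case using E0 by simp
  next
    case (Suc p)
    have IH: "\<And>x v. A < v \<Longrightarrow> v < B \<Longrightarrow> mpd p q F (x,v) = SM p q (x,v)"
      using Suc by simp
    show ?case
    proof (intro allI impI)
      fix x v :: real assume v: "A < v" "v < B"
      have "mpd (Suc p) q F (x,v) = deriv (\<lambda>y. mpd p q F (y,v)) x"
        by (simp add: mpd_Suc_x pdx_def)
      also have "(\<lambda>y. mpd p q F (y,v)) = (\<lambda>y. SM p q (y,v))"
        using IH v by simp
      also have "deriv (\<lambda>y. SM p q (y,v)) x = SM (Suc p) q (x,v)"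
        using ser_x[of p q v x] Suc.prems v by (intro DERIV_imp_deriv) simp
      finally show "mpd (Suc p) q F (x,v) = SM (Suc p) q (x,v)" .
    qed
  qed
  show ?thesis using E[OF pq] v by simp
qed

lemma ser_abc:
  fixes F :: "real \<times> real \<Rightarrow> real"
  assumes F: "\<And>u v. A < v \<Longrightarrow> v < B \<Longrightarrow> F (u,v) = (\<Sum>m. g m (u,v))"
  shows "abc A B F"
  unfolding abc_def
proof (intro conjI allI impI)
  fix p q :: nat and x v :: real assume pq: "p + q < 3" and v: "A < v" "v < B"
  have "(\<lambda>y. mpd p q F (y,v)) = (\<lambda>y. SM p q (y,v))"
    using ser_E[OF F, of p q] pq v by simp
  moreover have "mpd (Suc p) q F (x,v) = SM (Suc p) q (x,v)"
    using ser_E[OF F, of "Suc p" q] pq v by simp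
  ultimately show "((\<lambda>y. mpd p q F (y,v)) has_real_derivative mpd (Suc p) q F (x,v)) (at x)"
    using ser_x[OF pq v] by simp
next
  fix q :: nat and x v :: real assume q: "q < (3::nat)" and v: "A < v" "v < B"
  have "mpd 0 (Suc q) F (x,v) = SM 0 (Suc q) (x,v)"
    using ser_E[OF F, of 0 "Suc q"] q v by simp
  then have "((\<lambda>w. SM 0 q (x,w)) has_real_derivative mpd 0 (Suc q) F (x,v)) (at v)"
    using ser_v[OF q v] by simp
  then show "((\<lambda>w. mpd 0 q F (x,w)) has_real_derivative mpd 0 (Suc q) F (x,v)) (at v)"
  proof (rule has_field_derivative_transform_within_open[where S = "{A<..<B}"])
    show "SM 0 q (x, w) = mpd 0 q F (x, w)" if "w \<in> {A<..<B}" for w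
      using ser_E[OF F, of 0 q] q that by simp
  qed (use v in auto)
next
  fix p q :: nat assume pq: "p + q \<le> 3"
  show "continuous_on (UNIV \<times> {A<..<B}) (mpd p q F)"
  proof (rule continuous_on_eq[OF ser_cont[OF pq]])
    fix z :: "real \<times> real" assume "z \<in> UNIV \<times> {A<..<B}"
    then show "SM p q z = mpd p q F z" using ser_E[OF F pq] by force
  qed
qed

end


lemma abc_lip:
  assumes abc: "abc A B F" and ab: "A < a" "b < B"
  shows "\<exists>L\<ge>0. \<forall>u1 u2 v1 v2. u1 \<in> {-M..M} \<longrightarrow> u2 \<in> {-M..M} \<longrightarrow> v1 \<in> {a..b} \<longrightarrow> v2 \<in> {a..b} \<longrightarrow>
     \<bar>F (u1,v1) - F (u2,v2)\<bar> \<le> L * (\<bar>u1 - u2\<bar> + \<bar>v1 - v2\<bar>)"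
proof -
  let ?K = "{-M..M} \<times> {a..b} :: (real \<times> real) set"
  have cK: "compact ?K" by (intro compact_Times) auto
  have sub: "?K \<subseteq> UNIV \<times> {A<..<B}" using ab by auto
  obtain L1 where L1: "L1 \<ge> 0" "\<And>z. z \<in> ?K \<Longrightarrow> norm (mpd 1 0 F z) \<le> L1"
    using continuous_on_compact_bound[OF cK continuous_on_subset[OF abc_c[OF abc, of 1 0] sub]] by auto
  obtain L2 where L2: "L2 \<ge> 0" "\<And>z. z \<in> ?K \<Longrightarrow> norm (mpd 0 1 F z) \<le> L2"
    using continuous_on_compact_bound[OF cK continuous_on_subset[OF abc_c[OF abc, of 0 1] sub]] by auto
  show ?thesis
  proof (intro exI[of _ "max L1 L2"] conjI allI impI)
    show "max L1 L2 \<ge> 0" using L1 by simp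
    fix u1 u2 v1 v2 assume u1: "u1 \<in> {-M..M}" and u2: "u2 \<in> {-M..M}" and v1: "v1 \<in> {a..b}" and v2: "v2 \<in> {a..b}"
    have "\<exists>t. min u2 u1 \<le> t \<and> t \<le> max u2 u1 \<and> F (u1,v1) - F (u2,v1) = (u1 - u2) * mpd 1 0 F (t,v1)"
    proof (rule mvt_between)
      fix t assume "min u2 u1 \<le> t" "t \<le> max u2 u1"
      show "((\<lambda>y. F (y,v1)) has_real_derivative mpd 1 0 F (t,v1)) (at t)"
        using abc_a[OF abc, of 0 0 v1 t] v1 ab by simp
    qed
    then obtain t where t: "min u2 u1 \<le> t" "t \<le> max u2 u1" "F (u1,v1) - F (u2,v1) = (u1 - u2) * mpd 1 0 F (t,v1)"
      by blast
    have "(t,v1) \<in> ?K" using t u1 u2 v1 by (auto simp: min_def max_def split: if_splits)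
    then have "\<bar>F (u1,v1) - F (u2,v1)\<bar> \<le> \<bar>u1 - u2\<bar> * L1"
      using L1(2) unfolding t(3) abs_mult by (intro mult_left_mono) auto
    moreover
    have "\<exists>w. min v2 v1 \<le> w \<and> w \<le> max v2 v1 \<and> F (u2,v1) - F (u2,v2) = (v1 - v2) * mpd 0 1 F (u2,w)"
    proof (rule mvt_between)
      fix w assume "min v2 v1 \<le> w" "w \<le> max v2 v1"
      then have "A < w" "w < B" using v1 v2 ab by (auto simp: min_def max_def split: if_splits)
      then show "((\<lambda>w. F (u2,w)) has_real_derivative mpd 0 1 F (u2,w)) (at w)"
        using abc_b[OF abc, of 0 w u2] by simp
    qed
    then obtain w where w: "min v2 v1 \<le> w" "w \<le> max v2 v1" "F (u2,v1) - F (u2,v2) = (v1 - v2) * mpd 0 1 F (u2,w)"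
      by blast
    have "(u2,w) \<in> ?K" using w u2 v1 v2 by (auto simp: min_def max_def split: if_splits)
    then have "\<bar>F (u2,v1) - F (u2,v2)\<bar> \<le> \<bar>v1 - v2\<bar> * L2"
      using L2(2) unfolding w(3) abs_mult by (intro mult_left_mono) auto
    moreover have "\<bar>u1 - u2\<bar> * L1 \<le> \<bar>u1 - u2\<bar> * max L1 L2" "\<bar>v1 - v2\<bar> * L2 \<le> \<bar>v1 - v2\<bar> * max L1 L2"
      by (intro mult_left_mono; simp)+
    moreover have "\<bar>F (u1,v1) - F (u2,v2)\<bar> \<le> \<bar>F (u1,v1) - F (u2,v1)\<bar> + \<bar>F (u2,v1) - F (u2,v2)\<bar>"
      by linarith
    ultimately show "\<bar>F (u1,v1) - F (u2,v2)\<bar> \<le> max L1 L2 * (\<bar>u1 - u2\<bar> + \<bar>v1 - v2\<bar>)"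
      by (simp add: algebra_simps)
  qed
qed

lemma quot_le:
  fixes n d L :: real
  assumes "n \<le> L * d" "0 \<le> L" "0 \<le> n"
  shows "n / d \<le> L"
proof (cases "d > 0")
  case True then show ?thesis using assms by (simp add: divide_le_eq mult.commute)
next
  case False
  then have "d \<le> 0" by simp
  then have "n / d \<le> 0" using assms by (simp add: divide_nonneg_nonpos)
  then show ?thesis using assms by simp
qed


context
  fixes A B :: real and D :: "nat \<Rightarrow> nat \<Rightarrow> real \<times> real \<Rightarrow> real" and f :: "real \<times> real \<Rightarrow> real"
  assumes fdx: "\<And>p q x v. p < 3 \<Longrightarrow> A < v \<Longrightarrow> v < B \<Longrightarrow>
     ((\<lambda>y. D p q (y,v)) has_real_derivative D (Suc p) q (x,v)) (at x)"
  and fdv: "\<And>q x v. q < 3 \<Longrightarrow> A < v \<Longrightarrow> v < B \<Longrightarrow>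
     ((\<lambda>w. D 0 q (x,w)) has_real_derivative D 0 (Suc q) (x,v)) (at v)"
  and fc: "\<And>p q. p \<le> 3 \<Longrightarrow> continuous_on (UNIV \<times> {A<..<B}) (D p q)"
  and f0: "D 0 0 = f"
begin

lemma formula_E:
  assumes pq: "p \<le> 3" "q \<le> 3" and v: "A < v" "v < B"
  shows "mpd p q f (x,v) = D p q (x,v)"
proof -
  have E0: "\<forall>x v. A < v \<longrightarrow> v < B \<longrightarrow> mpd 0 q f (x,v) = D 0 q (x,v)" if "q \<le> 3" for q
    using that
  proof (induction q)
    case 0
    then show ?case using f0 by simp
  next
    case (Suc q)
    have IH: "\<And>x v. A < v \<Longrightarrow> v < B \<Longrightarrow> mpd 0 q f (x,v) = D 0 q (x,v)"
      using Suc by simp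
    show ?case
    proof (intro allI impI)
      fix x v :: real assume v: "A < v" "v < B"
      have "mpd 0 (Suc q) f (x,v) = deriv (\<lambda>w. mpd 0 q f (x,w)) v"
        by (simp add: mpd_Suc_v pdv_def)
      also have "\<dots> = deriv (\<lambda>w. D 0 q (x,w)) v"
      proof (rule deriv_cong_ev[OF _ refl])
        have "eventually (\<lambda>w. w \<in> {A<..<B}) (nhds v)"
          using v by (intro eventually_nhds_in_open) auto
        then show "\<forall>\<^sub>F w in nhds v. mpd 0 q f (x, w) = D 0 q (x, w)"
          by eventually_elim (use IH in simp)
      qed
      also have "\<dots> = D 0 (Suc q) (x,v)"
        using fdv[of q v x] Suc.prems v by (intro DERIV_imp_deriv) simp
      finally show "mpd 0 (Suc q) f (x,v) = D 0 (Suc q) (x,v)" .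
    qed
  qed
  have E: "\<forall>x v. A < v \<longrightarrow> v < B \<longrightarrow> mpd p q f (x,v) = D p q (x,v)" if "p \<le> 3" for p :: nat
    using that
  proof (induction p)
    case 0
    then show ?case using E0 pq by simp
  next
    case (Suc p)
    have IH: "\<And>x v. A < v \<Longrightarrow> v < B \<Longrightarrow> mpd p q f (x,v) = D p q (x,v)"
      using Suc by simp
    show ?case
    proof (intro allI impI)
      fix x v :: real assume v: "A < v" "v < B"
      have "mpd (Suc p) q f (x,v) = deriv (\<lambda>y. mpd p q f (y,v)) x"
        by (simp add: mpd_Suc_x pdx_def)
      also have "(\<lambda>y. mpd p q f (y,v)) = (\<lambda>y. D p q (y,v))"
        using IH v by simp
      also have "deriv (\<lambda>y. D p q (y,v)) x = D (Suc p) q (x,v)"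
        using fdx[of p v q x] Suc.prems v by (intro DERIV_imp_deriv) simp
      finally show "mpd (Suc p) q f (x,v) = D (Suc p) q (x,v)" .
    qed
  qed
  show ?thesis using E[OF pq(1)] v by simp
qed

lemma formula_abc: "abc A B f"
  unfolding abc_def
proof (intro conjI allI impI)
  fix p q :: nat and x v :: real assume pq: "p + q < 3" and v: "A < v" "v < B"
  have "(\<lambda>y. mpd p q f (y,v)) = (\<lambda>y. D p q (y,v))"
    using formula_E[of p q v] pq v by simp
  moreover have "mpd (Suc p) q f (x,v) = D (Suc p) q (x,v)"
    using formula_E[of "Suc p" q v] pq v by simp
  ultimately show "((\<lambda>y. mpd p q f (y,v)) has_real_derivative mpd (Suc p) q f (x,v)) (at x)"
    using fdx[of p v q x] pq v by simp
next
  fix q :: nat and x v :: real assume q: "q < (3::nat)" and v: "A < v" "v < B"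
  have "mpd 0 (Suc q) f (x,v) = D 0 (Suc q) (x,v)"
    using formula_E[of 0 "Suc q" v] q v by simp
  then have "((\<lambda>w. D 0 q (x,w)) has_real_derivative mpd 0 (Suc q) f (x,v)) (at v)"
    using fdv[OF q v] by simp
  then show "((\<lambda>w. mpd 0 q f (x,w)) has_real_derivative mpd 0 (Suc q) f (x,v)) (at v)"
  proof (rule has_field_derivative_transform_within_open[where S = "{A<..<B}"])
    show "D 0 q (x, w) = mpd 0 q f (x, w)" if "w \<in> {A<..<B}" for w
      using formula_E[of 0 q w x] q that by simp
  qed (use v in auto)
next
  fix p q :: nat assume pq: "p + q \<le> 3"
  show "continuous_on (UNIV \<times> {A<..<B}) (mpd p q f)"
  proof (rule continuous_on_eq[OF fc])
    fix z :: "real \<times> real" assume "z \<in> UNIV \<times> {A<..<B}"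
    then show "D p q z = mpd p q f z" using formula_E[of p q] pq by force
  qed (use pq in simp)
qed

end



lemma lim_ratio4: "(\<lambda>n. ((real n + 3) / (real n + 2)) ^ 4) \<longlonglongrightarrow> 1"
proof -
  have "filterlim (\<lambda>n. 2 + real n) at_top sequentially"
    by (rule filterlim_tendsto_add_at_top[OF tendsto_const filterlim_real_sequentially])
  then have "filterlim (\<lambda>n. real n + 2) at_top sequentially" by (simp add: add.commute)
  then have "(\<lambda>n. 1 / (real n + 2)) \<longlonglongrightarrow> 0"
    by (intro tendsto_divide_0[OF tendsto_const] filterlim_at_top_imp_at_infinity)
  then have "(\<lambda>n. 1 + 1 / (real n + 2)) \<longlonglongrightarrow> 1 + 0" by (intro tendsto_add tendsto_const)
  moreover have "1 + 1 / (real n + 2) = (real n + 3) / (real n + 2)" for n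
    by (simp add: field_simps)
  ultimately have "(\<lambda>n. (real n + 3) / (real n + 2)) \<longlonglongrightarrow> 1" by simp
  from tendsto_power[OF this, of 4] show ?thesis by simp
qed

lemma summable_poly_geom:
  fixes \<rho> :: real
  assumes "0 < \<rho>" "\<rho> < 1"
  shows "summable (\<lambda>n. (real n + 2) ^ 4 * \<rho> ^ n)"
proof -
  define c where "c = (1 + \<rho>) / 2"
  have c: "c < 1" "\<rho> < c" using assms by (auto simp: c_def)
  have "1 < c / \<rho>" using c assms by (simp add: field_simps)
  with lim_ratio4 have "eventually (\<lambda>n. ((real n + 3) / (real n + 2)) ^ 4 < c / \<rho>) sequentially"
    by (rule order_tendstoD)
  then obtain N where N: "\<And>n. n \<ge> N \<Longrightarrow> ((real n + 3) / (real n + 2)) ^ 4 < c / \<rho>"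
    by (auto simp: eventually_sequentially)
  show ?thesis
  proof (rule summable_ratio_test[OF c(1), of N])
    fix n assume n: "N \<le> n"
    have pos: "0 < (real n + 2) ^ 4 * \<rho> ^ n" using assms by simp
    have "((real n + 3) / (real n + 2)) ^ 4 * \<rho> \<le> c"
      using N[OF n] assms by (simp add: field_simps)
    then have "(real n + 3) ^ 4 / (real n + 2) ^ 4 * \<rho> \<le> c" by (simp add: power_divide)
    then have "(real n + 3) ^ 4 * \<rho> \<le> c * (real n + 2) ^ 4" by (simp add: field_simps)
    then have "(real n + 3) ^ 4 * \<rho> * \<rho> ^ n \<le> c * (real n + 2) ^ 4 * \<rho> ^ n"
      using assms by (intro mult_right_mono) auto
    then show "norm ((real (Suc n) + 2) ^ 4 * \<rho> ^ Suc n) \<le> c * norm ((real n + 2) ^ 4 * \<rho> ^ n)"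
      using assms by (simp add: abs_mult algebra_simps numeral_3_eq_3)
  qed
qed

lemma summable_nat_powr:
  fixes s :: real
  assumes "s < -1" "0 \<le> d"
  shows "summable (\<lambda>n. (real n + d + 1) powr s)"
proof (rule summable_comparison_test'[where N = 1])
  show "summable (\<lambda>n. real n powr s)" using assms summable_real_powr_iff by simp
  fix n :: nat assume "1 \<le> n"
  then show "norm ((real n + d + 1) powr s) \<le> real n powr s"
    using assms by (simp add: powr_mono2')
qed

lemma summable_int_powr:
  fixes s :: real
  assumes "s < -1"
  shows "(\<lambda>k::int. (3 + \<bar>real_of_int k\<bar>) powr s) summable_on UNIV"
proof -
  have s1: "(\<lambda>n. (real n + 2 + 1) powr s) summable_on UNIV"
    using summable_nat_powr[OF assms, of 2] by (intro summable_nonneg_imp_summable_on) auto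
  have s2: "(\<lambda>n. (real n + 3 + 1) powr s) summable_on UNIV"
    using summable_nat_powr[OF assms, of 3] by (intro summable_nonneg_imp_summable_on) auto
  let ?f = "\<lambda>k::int. (3 + \<bar>real_of_int k\<bar>) powr s"
  have A: "?f summable_on range int"
  proof -
    have "(?f \<circ> int) summable_on UNIV" using s1 by (simp add: o_def add_ac)
    then show ?thesis by (subst summable_on_reindex) (auto intro: inj_onI)
  qed
  have B: "?f summable_on range (\<lambda>n. - int (Suc n))"
  proof -
    have "(?f \<circ> (\<lambda>n. - int (Suc n))) summable_on UNIV" using s2 by (simp add: o_def add_ac)
    then show ?thesis by (subst summable_on_reindex) (auto intro: inj_onI)
  qed
  have U: "range int \<union> range (\<lambda>n. - int (Suc n)) = (UNIV :: int set)"
  proof (rule set_eqI)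
    fix k :: int
    show "k \<in> range int \<union> range (\<lambda>n. - int (Suc n)) \<longleftrightarrow> k \<in> UNIV"
    proof (cases "k \<ge> 0")
      case True then show ?thesis by (auto intro!: image_eqI[of _ _ "nat k"])
    next
      case False then show ?thesis by (auto intro!: image_eqI[of _ _ "nat (- k - 1)"])
    qed
  qed
  have "?f summable_on (range int \<union> range (\<lambda>n. - int (Suc n)))"
    by (rule summable_on_Un_disjoint[OF A B]) auto
  then show ?thesis unfolding U .
qed

lemma summable_prod_nat_int:
  fixes a :: "nat \<Rightarrow> real" and b :: "int \<Rightarrow> real"
  assumes a: "summable a" "\<And>n. a n \<ge> 0" and b: "b summable_on UNIV" "\<And>k. b k \<ge> 0"
  shows "(\<lambda>(n,k). a n * b k) summable_on (UNIV \<times> UNIV)"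
proof (rule summable_on_SigmaI[where g = "\<lambda>n. a n * infsum b UNIV"])
  show "((\<lambda>k. case (n, k) of (n, k) \<Rightarrow> a n * b k) has_sum a n * infsum b UNIV) UNIV" for n
    using has_sum_cmult_right[OF has_sum_infsum[OF b(1)], of "a n"] by simp
  have "a summable_on UNIV" using a by (intro summable_nonneg_imp_summable_on)
  then show "(\<lambda>n. a n * infsum b UNIV) summable_on UNIV"
    by (rule summable_on_cmult_left)
  show "0 \<le> (case (n, k) of (n, k) \<Rightarrow> a n * b k)" for n k using a b by simp
qed



lemma DERIV_two_powr: "((\<lambda>w. 2 powr (c * w)) has_real_derivative 2 powr (c * v) * (c * ln 2)) (at v)"
  by (auto intro!: derivative_eq_intros)

lemma pascal3:
  fixes c :: real and T :: "nat \<Rightarrow> real"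
  assumes "q < 3"
  shows "c * (\<Sum>i\<le>q. real (q choose i) * c ^ (q - i) * T i) + (\<Sum>i\<le>q. real (q choose i) * c ^ (q - i) * T (Suc i))
    = (\<Sum>i\<le>Suc q. real (Suc q choose i) * c ^ (Suc q - i) * T i)"
proof -
  have "q = 0 \<or> q = 1 \<or> q = 2" using assms by auto
  then show ?thesis
    by (elim disjE) (simp_all add: numeral_2_eq_2 numeral_3_eq_3 algebra_simps power2_eq_square)
qed

context
  fixes \<alpha> :: real and \<psi> :: "real \<Rightarrow> real" and eps :: "int \<Rightarrow> int \<Rightarrow> real"
  assumes Psi_diff: "\<forall>p q. p < 3 \<longrightarrow> (\<forall>x v. 1 / \<alpha> < v \<and> v < 1 \<longrightarrow>
                     (\<lambda>y. mpd p q (Psi \<alpha> \<psi>) (y, v)) differentiable (at x))"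
    and Psi_diffv: "\<forall>p q. p \<le> 3 \<longrightarrow> (\<forall>x v. 1 / \<alpha> < v \<and> v < 1 \<longrightarrow>
                     (\<lambda>w. mpd p q (Psi \<alpha> \<psi>) (x, w)) differentiable (at v))"
    and Psi_cont: "\<forall>p q. p \<le> 3 \<longrightarrow>
                     continuous_on (UNIV \<times> {1 / \<alpha> <..< 1}) (mpd p q (Psi \<alpha> \<psi>))"
    and alpha1: "1 < \<alpha>"
    and Psi_decay: "\<forall>p q a b. p \<le> 3 \<and> 1 / \<alpha> < a \<and> a \<le> b \<and> b < 1 \<longrightarrow>
                     (\<exists>C. \<forall>x. \<forall>v\<in>{a..b}. (3 + \<bar>x\<bar>)\<^sup>2 * \<bar>mpd p q (Psi \<alpha> \<psi>) (x, v)\<bar> \<le> C)"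
    and eps_bound: "\<forall>\<eta>>0. \<exists>C>0. \<forall>j k. \<bar>eps j k\<bar> \<le>
                     C * (3 + \<bar>real_of_int j\<bar>) powr (1 / \<alpha> + \<eta>) * (3 + \<bar>real_of_int k\<bar>) powr (1 / \<alpha> + \<eta>)"
begin

lemma Psi_dx:
  assumes "p < 3" "1 / \<alpha> < v" "v < 1"
  shows "((\<lambda>y. mpd p i (Psi \<alpha> \<psi>) (y,v)) has_real_derivative mpd (Suc p) i (Psi \<alpha> \<psi>) (x,v)) (at x)"
proof -
  have "(\<lambda>y. mpd p i (Psi \<alpha> \<psi>) (y, v)) differentiable (at x)" using Psi_diff assms by blast
  then have "((\<lambda>y. mpd p i (Psi \<alpha> \<psi>) (y,v)) has_real_derivative deriv (\<lambda>y. mpd p i (Psi \<alpha> \<psi>) (y,v)) x) (at x)"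
    by (simp add: DERIV_deriv_iff_real_differentiable)
  then show ?thesis by (simp add: mpd_Suc_x pdx_def)
qed

lemma Psi_dv:
  assumes "1 / \<alpha> < v" "v < 1"
  shows "((\<lambda>w. mpd 0 i (Psi \<alpha> \<psi>) (x,w)) has_real_derivative mpd 0 (Suc i) (Psi \<alpha> \<psi>) (x,v)) (at v)"
proof -
  have "(\<lambda>w. mpd 0 i (Psi \<alpha> \<psi>) (x, w)) differentiable (at v)" using Psi_diffv assms by blast
  then have "((\<lambda>w. mpd 0 i (Psi \<alpha> \<psi>) (x,w)) has_real_derivative deriv (\<lambda>w. mpd 0 i (Psi \<alpha> \<psi>) (x,w)) v) (at v)"
    by (simp add: DERIV_deriv_iff_real_differentiable)
  then show ?thesis by (simp add: mpd_Suc_v pdv_def)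
qed

definition TT :: "nat \<Rightarrow> nat \<Rightarrow> nat \<Rightarrow> int \<Rightarrow> real \<times> real \<Rightarrow> real" where
  "TT p i n k z = (1 / 2 ^ Suc n) ^ p * mpd p i (Psi \<alpha> \<psi>) (fst z / 2 ^ Suc n - real_of_int k, snd z)
      - (if p = 0 then 1 else 0) * mpd 0 i (Psi \<alpha> \<psi>) (- real_of_int k, snd z)"

definition DD :: "nat \<Rightarrow> nat \<Rightarrow> nat \<Rightarrow> int \<Rightarrow> real \<times> real \<Rightarrow> real" where
  "DD p q n k z = 2 powr (real (Suc n) * snd z) * eps (- int (Suc n)) k *
     (\<Sum>i\<le>q. real (q choose i) * (real (Suc n) * ln 2) ^ (q - i) * TT p i n k z)"

definition tm :: "nat \<Rightarrow> int \<Rightarrow> real \<times> real \<Rightarrow> real" where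
  "tm n k = (\<lambda>(u, v). 2 powr (real (Suc n) * v) * eps (- int (Suc n)) k *
     (Psi \<alpha> \<psi> (u / 2 ^ Suc n - real_of_int k, v) - Psi \<alpha> \<psi> (- real_of_int k, v)))"

lemma DD_00: "DD 0 0 n k = tm n k"
  by (auto simp: DD_def TT_def tm_def fun_eq_iff)

lemma TT_x:
  assumes "p < 3" "1 / \<alpha> < v" "v < 1"
  shows "((\<lambda>y. TT p i n k (y,v)) has_real_derivative TT (Suc p) i n k (x,v)) (at x)"
proof -
  have d: "((\<lambda>y. mpd p i (Psi \<alpha> \<psi>) (y / 2 ^ Suc n - real_of_int k, v)) has_real_derivative
      mpd (Suc p) i (Psi \<alpha> \<psi>) (x / 2 ^ Suc n - real_of_int k, v) * (1 / 2 ^ Suc n)) (at x)"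
    by (rule DERIV_chain2[OF Psi_dx[OF assms]]) (auto intro!: derivative_eq_intros)
  have "((\<lambda>y. (1 / 2 ^ Suc n) ^ p * mpd p i (Psi \<alpha> \<psi>) (y / 2 ^ Suc n - real_of_int k, v)
      - (if p = 0 then 1 else 0) * mpd 0 i (Psi \<alpha> \<psi>) (- real_of_int k, v)) has_real_derivative
      (1 / 2 ^ Suc n) ^ p * (mpd (Suc p) i (Psi \<alpha> \<psi>) (x / 2 ^ Suc n - real_of_int k, v) * (1 / 2 ^ Suc n)) - 0) (at x)"
    by (intro DERIV_diff DERIV_cmult d DERIV_const)
  then show ?thesis by (simp add: TT_def mult_ac)
qed

lemma DD_x:
  assumes "p < 3" "1 / \<alpha> < v" "v < 1"
  shows "((\<lambda>y. DD p q n k (y,v)) has_real_derivative DD (Suc p) q n k (x,v)) (at x)"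
proof -
  have "((\<lambda>y. 2 powr (real (Suc n) * v) * eps (- int (Suc n)) k *
     (\<Sum>i\<le>q. real (q choose i) * (real (Suc n) * ln 2) ^ (q - i) * TT p i n k (y,v))) has_real_derivative
     2 powr (real (Suc n) * v) * eps (- int (Suc n)) k *
     (\<Sum>i\<le>q. real (q choose i) * (real (Suc n) * ln 2) ^ (q - i) * TT (Suc p) i n k (x,v))) (at x)"
    by (intro DERIV_cmult DERIV_sum TT_x assms)
  then show ?thesis by (simp add: DD_def)
qed

lemma TT_v:
  assumes "1 / \<alpha> < v" "v < 1"
  shows "((\<lambda>w. TT 0 i n k (x,w)) has_real_derivative TT 0 (Suc i) n k (x,v)) (at v)"
proof -
  have "((\<lambda>w. mpd 0 i (Psi \<alpha> \<psi>) (x / 2 ^ Suc n - real_of_int k, w) - mpd 0 i (Psi \<alpha> \<psi>) (- real_of_int k, w))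
     has_real_derivative mpd 0 (Suc i) (Psi \<alpha> \<psi>) (x / 2 ^ Suc n - real_of_int k, v) - mpd 0 (Suc i) (Psi \<alpha> \<psi>) (- real_of_int k, v)) (at v)"
    by (intro DERIV_diff Psi_dv assms)
  then show ?thesis by (simp add: TT_def)
qed

lemma DD_v:
  assumes "q < 3" "1 / \<alpha> < v" "v < 1"
  shows "((\<lambda>w. DD 0 q n k (x,w)) has_real_derivative DD 0 (Suc q) n k (x,v)) (at v)"
proof -
  define c where "c = real (Suc n) * ln 2"
  define e where "e = eps (- int (Suc n)) k"
  have "((\<lambda>w. 2 powr (real (Suc n) * w) * (e *
     (\<Sum>i\<le>q. real (q choose i) * c ^ (q - i) * TT 0 i n k (x,w)))) has_real_derivative
     2 powr (real (Suc n) * v) * (real (Suc n) * ln 2) * (e * (\<Sum>i\<le>q. real (q choose i) * c ^ (q - i) * TT 0 i n k (x,v)))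
     + (e * (\<Sum>i\<le>q. real (q choose i) * c ^ (q - i) * TT 0 (Suc i) n k (x,v))) * 2 powr (real (Suc n) * v)) (at v)"
    by (intro DERIV_mult DERIV_two_powr DERIV_cmult DERIV_sum TT_v assms)
  also have "2 powr (real (Suc n) * v) * (real (Suc n) * ln 2) * (e * (\<Sum>i\<le>q. real (q choose i) * c ^ (q - i) * TT 0 i n k (x,v)))
     + (e * (\<Sum>i\<le>q. real (q choose i) * c ^ (q - i) * TT 0 (Suc i) n k (x,v))) * 2 powr (real (Suc n) * v)
     = 2 powr (real (Suc n) * v) * e * (c * (\<Sum>i\<le>q. real (q choose i) * c ^ (q - i) * TT 0 i n k (x,v))
         + (\<Sum>i\<le>q. real (q choose i) * c ^ (q - i) * TT 0 (Suc i) n k (x,v)))"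
    by (simp add: c_def algebra_simps)
  also have "\<dots> = 2 powr (real (Suc n) * v) * e * (\<Sum>i\<le>Suc q. real (Suc q choose i) * c ^ (Suc q - i) * TT 0 i n k (x,v))"
    using pascal3[OF assms(1), of c "\<lambda>i. TT 0 i n k (x,v)"] by (simp only:)
  also have "\<dots> = DD 0 (Suc q) n k (x,v)"
    by (simp only: DD_def c_def e_def snd_conv)
  finally show ?thesis by (simp add: DD_def c_def e_def mult.assoc)
qed

lemma DD_cont:
  assumes "p \<le> 3"
  shows "continuous_on (UNIV \<times> {1 / \<alpha> <..< 1}) (DD p q n k)"
proof -
  let ?S = "UNIV \<times> {1 / \<alpha> <..< 1} :: (real \<times> real) set"
  have c1: "continuous_on ?S (\<lambda>z. mpd p i (Psi \<alpha> \<psi>) (fst z / 2 ^ Suc n - real_of_int k, snd z))" for i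
    by (rule continuous_on_compose2[OF Psi_cont[rule_format, OF assms]]) (auto intro!: continuous_intros)
  have c2: "continuous_on ?S (\<lambda>z. mpd 0 i (Psi \<alpha> \<psi>) (- real_of_int k, snd z))" for i
    by (rule continuous_on_compose2[OF Psi_cont[rule_format, of 0]]) (auto intro!: continuous_intros)
  have "continuous_on ?S (TT p i n k)" for i
    unfolding TT_def[abs_def] by (intro continuous_intros c1 c2)
  then show ?thesis
    unfolding DD_def[abs_def] by (intro continuous_intros) auto
qed

lemma tm_abc: "abc (1 / \<alpha>) 1 (tm n k)"
  by (rule formula_abc[where D = "\<lambda>p q. DD p q n k"])
     (auto intro: DD_x DD_v DD_cont simp: DD_00)

lemma tm_mpd: "p \<le> 3 \<Longrightarrow> q \<le> 3 \<Longrightarrow> 1 / \<alpha> < v \<Longrightarrow> v < 1 \<Longrightarrow> mpd p q (tm n k) (x,v) = DD p q n k (x,v)"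
  by (rule formula_E[where D = "\<lambda>p q. DD p q n k"])
     (auto intro: DD_x DD_v DD_cont simp: DD_00)

lemma shift_bound:
  fixes t s M :: real
  assumes "0 \<le> M" "\<bar>t - s\<bar> \<le> M"
  shows "1 / (3 + \<bar>t\<bar>)\<^sup>2 \<le> (1 + M)\<^sup>2 / (3 + \<bar>s\<bar>)\<^sup>2"
proof -
  have "M * 1 \<le> M * (3 + \<bar>t\<bar>)" using assms by (intro mult_left_mono) auto
  moreover have "\<bar>s\<bar> \<le> \<bar>t\<bar> + M" using assms by arith
  ultimately have "3 + \<bar>s\<bar> \<le> (1 + M) * (3 + \<bar>t\<bar>)"
    by (simp add: algebra_simps)
  then have "(3 + \<bar>s\<bar>)\<^sup>2 \<le> ((1 + M) * (3 + \<bar>t\<bar>))\<^sup>2"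
    by (intro power_mono) auto
  then have sq: "(3 + \<bar>s\<bar>)\<^sup>2 \<le> (1 + M)\<^sup>2 * (3 + \<bar>t\<bar>)\<^sup>2"
    by (simp only: power_mult_distrib)
  have p1: "0 < (3 + \<bar>t\<bar>)\<^sup>2" and p2: "0 < (3 + \<bar>s\<bar>)\<^sup>2" by (simp_all add: add_pos_nonneg)
  have "1 / (3 + \<bar>t\<bar>)\<^sup>2 = (3 + \<bar>s\<bar>)\<^sup>2 / ((3 + \<bar>t\<bar>)\<^sup>2 * (3 + \<bar>s\<bar>)\<^sup>2)"
    using p1 p2 by (simp add: field_simps)
  also have "\<dots> \<le> (1 + M)\<^sup>2 * (3 + \<bar>t\<bar>)\<^sup>2 / ((3 + \<bar>t\<bar>)\<^sup>2 * (3 + \<bar>s\<bar>)\<^sup>2)"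
    using p1 p2 sq by (intro divide_right_mono) auto
  also have "\<dots> = (1 + M)\<^sup>2 / (3 + \<bar>s\<bar>)\<^sup>2"
    using p1 p2 by (simp add: field_simps)
  finally show ?thesis .
qed

lemma TT_bound:
  assumes ab: "1 / \<alpha> < a" "b < 1" and M: "0 \<le> M"
    and Cm: "\<And>p i x v. p \<le> 3 \<Longrightarrow> i \<le> 3 \<Longrightarrow> a \<le> v \<Longrightarrow> v \<le> b \<Longrightarrow>
       (3 + \<bar>x\<bar>)\<^sup>2 * \<bar>mpd p i (Psi \<alpha> \<psi>) (x,v)\<bar> \<le> Cm"
    and pi: "p \<le> 3" "i \<le> 3" and u: "\<bar>u\<bar> \<le> M" and v: "a \<le> v" "v \<le> b"
  shows "\<bar>TT p i n k (u,v)\<bar> \<le> (1 / 2 ^ Suc n) * (Cm * (1 + M) ^ 3) / (3 + \<bar>real_of_int k\<bar>)\<^sup>2"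
proof -
  define j :: real where "j = 2 ^ Suc n"
  have j: "j \<ge> 2" unfolding j_def using one_le_power[of "2::real" n] by simp
  define x' where "x' = u / j - real_of_int k"
  have ux: "\<bar>u / j\<bar> \<le> M / j" using u j by (simp add: abs_divide divide_right_mono)
  have "M * 1 \<le> M * j" using M j by (intro mult_left_mono) auto
  then have Mj: "M / j \<le> M" using j by (simp add: divide_le_eq)
  have bnd: "\<bar>mpd p' i (Psi \<alpha> \<psi>) (t,v)\<bar> \<le> Cm * (1 + M)\<^sup>2 / (3 + \<bar>real_of_int k\<bar>)\<^sup>2"
    if "p' \<le> 3" "\<bar>t - (- real_of_int k)\<bar> \<le> M" for p' t
  proof -
    have "(3 + \<bar>t\<bar>)\<^sup>2 * \<bar>mpd p' i (Psi \<alpha> \<psi>) (t,v)\<bar> \<le> Cm" using Cm[OF that(1) pi(2) v] .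
    then have "\<bar>mpd p' i (Psi \<alpha> \<psi>) (t,v)\<bar> \<le> Cm * (1 / (3 + \<bar>t\<bar>)\<^sup>2)"
      by (simp add: field_simps)
    also have "\<dots> \<le> Cm * ((1 + M)\<^sup>2 / (3 + \<bar>real_of_int k\<bar>)\<^sup>2)"
    proof (rule mult_left_mono)
      show "1 / (3 + \<bar>t\<bar>)\<^sup>2 \<le> (1 + M)\<^sup>2 / (3 + \<bar>real_of_int k\<bar>)\<^sup>2"
        using shift_bound[OF M that(2)] by simp
      show "0 \<le> Cm" by (rule order_trans[OF _ \<open>(3 + \<bar>t\<bar>)\<^sup>2 * _ \<le> Cm\<close>]) simp
    qed
    finally show ?thesis by simp
  qed
  have Cm0: "0 \<le> Cm" by (rule order_trans[OF _ Cm[OF pi(1) pi(2) v, of 0]]) simp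
  have K0: "0 \<le> Cm * (1 + M)\<^sup>2 / (3 + \<bar>real_of_int k\<bar>)\<^sup>2" using Cm0 M by simp
  show ?thesis
  proof (cases "p = 0")
    case False
    have "\<bar>TT p i n k (u,v)\<bar> = (1 / j) ^ p * \<bar>mpd p i (Psi \<alpha> \<psi>) (x',v)\<bar>"
      using False by (simp add: TT_def x'_def j_def abs_mult)
    also have "\<dots> \<le> (1 / j) * (Cm * (1 + M)\<^sup>2 / (3 + \<bar>real_of_int k\<bar>)\<^sup>2)"
    proof (rule mult_mono)
      show "(1 / j) ^ p \<le> 1 / j" using power_decreasing[of 1 p "1/j"] False j by simp
    next
      show "\<bar>mpd p i (Psi \<alpha> \<psi>) (x',v)\<bar> \<le> Cm * (1 + M)\<^sup>2 / (3 + \<bar>real_of_int k\<bar>)\<^sup>2"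
        using bnd[OF pi(1)] ux Mj by (simp add: x'_def)
    qed (use j in auto)
    also have "\<dots> \<le> (1 / j) * (Cm * (1 + M) ^ 3 / (3 + \<bar>real_of_int k\<bar>)\<^sup>2)"
      using j Cm0 M by (intro mult_left_mono divide_right_mono mult_left_mono) (auto simp: power2_eq_square power3_eq_cube)
    finally show ?thesis by (simp add: j_def)
  next
    case True
    have "\<exists>t. min (- real_of_int k) x' \<le> t \<and> t \<le> max (- real_of_int k) x' \<and>
        mpd 0 i (Psi \<alpha> \<psi>) (x',v) - mpd 0 i (Psi \<alpha> \<psi>) (- real_of_int k, v) = (x' - (- real_of_int k)) * mpd 1 i (Psi \<alpha> \<psi>) (t,v)"
    proof (rule mvt_between)
      fix t show "((\<lambda>y. mpd 0 i (Psi \<alpha> \<psi>) (y,v)) has_real_derivative mpd 1 i (Psi \<alpha> \<psi>) (t,v)) (at t)"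
        using Psi_dx[of 0 v i t] ab v by simp
    qed
    then obtain t where t: "min (- real_of_int k) x' \<le> t" "t \<le> max (- real_of_int k) x'"
      "mpd 0 i (Psi \<alpha> \<psi>) (x',v) - mpd 0 i (Psi \<alpha> \<psi>) (- real_of_int k, v) = (x' - (- real_of_int k)) * mpd 1 i (Psi \<alpha> \<psi>) (t,v)"
      by blast
    have xk: "x' - (- real_of_int k) = u / j" by (simp add: x'_def)
    have "\<bar>t - (- real_of_int k)\<bar> \<le> \<bar>x' - (- real_of_int k)\<bar>"
      using t(1,2) by (auto simp: min_def max_def split: if_splits)
    then have "\<bar>t - (- real_of_int k)\<bar> \<le> \<bar>u / j\<bar>" by (simp only: xk)
    then have tk: "\<bar>t - (- real_of_int k)\<bar> \<le> M" using ux Mj by simp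
    have "\<bar>TT p i n k (u,v)\<bar> = \<bar>u / j\<bar> * \<bar>mpd 1 i (Psi \<alpha> \<psi>) (t,v)\<bar>"
      using True t(3) xk by (simp add: TT_def x'_def j_def abs_mult)
    also have "\<dots> \<le> (M / j) * (Cm * (1 + M)\<^sup>2 / (3 + \<bar>real_of_int k\<bar>)\<^sup>2)"
      by (rule mult_mono[OF ux bnd[OF _ tk]]) (use M j in auto)
    also have "\<dots> \<le> (1 / j) * (Cm * (1 + M) ^ 3 / (3 + \<bar>real_of_int k\<bar>)\<^sup>2)"
    proof -
      define K where "K = (3 + \<bar>real_of_int k\<bar>)\<^sup>2"
      have K: "K > 0" unfolding K_def by (simp add: add_pos_nonneg)
      have "M / j * (Cm * (1 + M)\<^sup>2) \<le> (1 + M) / j * (Cm * (1 + M)\<^sup>2)"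
        using j Cm0 M by (intro mult_right_mono divide_right_mono) auto
      then have "M / j * (Cm * (1 + M)\<^sup>2) / K \<le> (1 + M) / j * (Cm * (1 + M)\<^sup>2) / K"
        using K by (intro divide_right_mono) auto
      moreover have "M / j * (Cm * (1 + M)\<^sup>2 / K) = M / j * (Cm * (1 + M)\<^sup>2) / K" by simp
      moreover have "1 / j * (Cm * (1 + M) ^ 3 / K) = (1 + M) / j * (Cm * (1 + M)\<^sup>2) / K"
        using j K by (simp add: power3_eq_cube power2_eq_square field_simps)
      ultimately show ?thesis unfolding K_def[symmetric] by linarith
    qed
    finally show ?thesis by (simp add: j_def)
  qed
qed

lemma DD_bound:
  assumes ab: "1 / \<alpha> < a" "b < 1" and M: "0 \<le> M"
    and Cm: "\<And>p i x v. p \<le> 3 \<Longrightarrow> i \<le> 3 \<Longrightarrow> a \<le> v \<Longrightarrow> v \<le> b \<Longrightarrow>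
       (3 + \<bar>x\<bar>)\<^sup>2 * \<bar>mpd p i (Psi \<alpha> \<psi>) (x,v)\<bar> \<le> Cm"
    and Ce: "\<And>j k. \<bar>eps j k\<bar> \<le> Ce * (3 + \<bar>real_of_int j\<bar>) powr r * (3 + \<bar>real_of_int k\<bar>) powr r"
    and Ce0: "0 \<le> Ce"
    and pq: "p \<le> 3" "q \<le> 3" and u: "\<bar>u\<bar> \<le> M" and v: "a \<le> v" "v \<le> b"
  shows "\<bar>DD p q n k (u,v)\<bar> \<le> (Ce * (Cm * (1 + M) ^ 3) * (3 + real (Suc n)) powr r * (1 + real (Suc n)) ^ 3
           * (2 powr (real (Suc n) * b) / 2 ^ Suc n)) * (3 + \<bar>real_of_int k\<bar>) powr (r - 2)"
proof -
  define j where "j = real (Suc n)"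
  define c where "c = j * ln 2"
  define T0 where "T0 = (1 / 2 ^ Suc n) * (Cm * (1 + M) ^ 3)"
  define K2 where "K2 = (3 + \<bar>real_of_int k\<bar>)\<^sup>2"
  define Kr where "Kr = (3 + \<bar>real_of_int k\<bar>) powr r"
  have K2: "K2 > 0" unfolding K2_def by (simp add: add_pos_nonneg)
  have j1: "j \<ge> 1" unfolding j_def by simp
  have ln2: "0 \<le> ln (2::real)" "ln (2::real) \<le> 1" using ln_le_minus_one[of 2] by auto
  have c0: "0 \<le> c" "c \<le> j" unfolding c_def using ln2 j1 by (auto simp: mult_left_le)
  have Cm0: "0 \<le> Cm" by (rule order_trans[OF _ Cm[OF pq(1) pq(1) v, of 0]]) simp
  have T00: "0 \<le> T0" using Cm0 M by (simp add: T0_def)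
  have TT: "\<bar>TT p i n k (u,v)\<bar> \<le> T0 / K2" if "i \<le> q" for i
    using TT_bound[OF ab M Cm pq(1) _ u v, of i n k] that pq by (simp add: T0_def K2_def)
  have "\<bar>\<Sum>i\<le>q. real (q choose i) * c ^ (q - i) * TT p i n k (u,v)\<bar>
      \<le> (\<Sum>i\<le>q. real (q choose i) * c ^ (q - i) * (T0 / K2))"
  proof (rule order_trans[OF sum_abs sum_mono])
    fix i assume "i \<in> {..q}"
    then have "\<bar>TT p i n k (u,v)\<bar> \<le> T0 / K2" using TT by simp
    then have "real (q choose i) * c ^ (q - i) * \<bar>TT p i n k (u,v)\<bar> \<le> real (q choose i) * c ^ (q - i) * (T0 / K2)"
      using c0 by (intro mult_left_mono) auto
    then show "\<bar>real (q choose i) * c ^ (q - i) * TT p i n k (u,v)\<bar> \<le> real (q choose i) * c ^ (q - i) * (T0 / K2)"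
      using c0 by (simp add: abs_mult)
  qed
  also have "\<dots> = (1 + c) ^ q * (T0 / K2)"
    by (simp add: binomial_ring[of 1 c q] sum_distrib_right sum_divide_distrib)
  also have "\<dots> \<le> (1 + j) ^ 3 * (T0 / K2)"
  proof (rule mult_right_mono)
    have "(1 + c) ^ q \<le> (1 + c) ^ 3" using pq c0 by (intro power_increasing) auto
    also have "\<dots> \<le> (1 + j) ^ 3" using c0 by (intro power_mono) auto
    finally show "(1 + c) ^ q \<le> (1 + j) ^ 3" .
  qed (use T00 K2 in simp)
  finally have S: "\<bar>\<Sum>i\<le>q. real (q choose i) * c ^ (q - i) * TT p i n k (u,v)\<bar> \<le> (1 + j) ^ 3 * (T0 / K2)" .
  have E: "\<bar>eps (- int (Suc n)) k\<bar> \<le> Ce * (3 + j) powr r * Kr"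
    using Ce[of "- int (Suc n)" k] by (simp add: j_def Kr_def)
  have P: "2 powr (j * v) \<le> 2 powr (j * b)"
    using v j1 by (intro powr_mono) auto
  have "\<bar>DD p q n k (u,v)\<bar> = 2 powr (j * v) * \<bar>eps (- int (Suc n)) k\<bar> *
      \<bar>\<Sum>i\<le>q. real (q choose i) * c ^ (q - i) * TT p i n k (u,v)\<bar>"
    by (simp add: DD_def abs_mult j_def c_def)
  also have "\<dots> \<le> 2 powr (j * b) * (Ce * (3 + j) powr r * Kr) * ((1 + j) ^ 3 * (T0 / K2))"
    by (intro mult_mono P E S) (auto simp: Ce0 Kr_def)
  also have "\<dots> = (Ce * (Cm * (1 + M) ^ 3) * (3 + j) powr r * (1 + j) ^ 3
           * (2 powr (j * b) / 2 ^ Suc n)) * (Kr / K2)"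
    by (simp add: T0_def field_simps)
  also have "Kr / K2 = (3 + \<bar>real_of_int k\<bar>) powr (r - 2)"
    unfolding Kr_def K2_def by (simp add: powr_diff add_pos_nonneg)
  finally show ?thesis by (simp add: j_def)
qed

lemma alpha_sum_bound:
  assumes b: "b < 1" and r: "0 \<le> r" "r \<le> 1" and K: "0 \<le> K"
  shows "summable (\<lambda>n. K * (3 + real (Suc n)) powr r * (1 + real (Suc n)) ^ 3 * (2 powr (real (Suc n) * b) / 2 ^ Suc n))"
proof -
  define \<rho> where "\<rho> = 2 powr (b - 1)"
  have \<rho>: "0 < \<rho>" "\<rho> < 1" unfolding \<rho>_def using b powr_less_mono[of "b - 1" 0 2] by auto
  have eq: "2 powr (real (Suc n) * b) / 2 ^ Suc n = \<rho> * \<rho> ^ n" for n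
  proof -
    have p: "2 powr real (Suc n) = (2::real) ^ Suc n" by (rule powr_realpow) simp
    have "2 powr (real (Suc n) * b) / 2 ^ Suc n = 2 powr (real (Suc n) * b) / 2 powr real (Suc n)"
      by (simp only: p)
    also have "\<dots> = 2 powr ((b - 1) * real (Suc n))" by (simp add: powr_diff[symmetric] algebra_simps)
    also have "\<dots> = \<rho> powr real (Suc n)" by (simp add: \<rho>_def powr_powr)
    also have "\<dots> = \<rho> ^ Suc n" by (rule powr_realpow[OF \<rho>(1)])
    finally show ?thesis by simp
  qed
  have le: "(3 + real (Suc n)) powr r * (1 + real (Suc n)) ^ 3 \<le> 2 * (real n + 2) ^ 4" for n
  proof -
    have "(3 + real (Suc n)) powr r \<le> (3 + real (Suc n)) powr 1"
      using r by (intro powr_mono) auto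
    also have "\<dots> \<le> 2 * (real n + 2)" by simp
    finally have A: "(3 + real (Suc n)) powr r \<le> 2 * (real n + 2)" .
    have "(3 + real (Suc n)) powr r * (1 + real (Suc n)) ^ 3 \<le> 2 * (real n + 2) * (real n + 2) ^ 3"
      by (rule mult_mono[OF A]) (auto simp: add_ac)
    moreover have "2 * (real n + 2) * (real n + 2) ^ 3 = 2 * (real n + 2) ^ 4"
      by (simp add: numeral_eq_Suc algebra_simps)
    ultimately show ?thesis by simp
  qed
  show ?thesis
  proof (rule summable_comparison_test[where g = "\<lambda>n. (K * 2 * \<rho>) * ((real n + 2) ^ 4 * \<rho> ^ n)"])
    show "summable (\<lambda>n. (K * 2 * \<rho>) * ((real n + 2) ^ 4 * \<rho> ^ n))"
      by (intro summable_mult summable_poly_geom \<rho>)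
    show "\<exists>N. \<forall>n\<ge>N. norm (K * (3 + real (Suc n)) powr r * (1 + real (Suc n)) ^ 3 * (2 powr (real (Suc n) * b) / 2 ^ Suc n))
        \<le> K * 2 * \<rho> * ((real n + 2) ^ 4 * \<rho> ^ n)"
    proof (intro exI allI impI)
      fix n :: nat
      have "K * ((3 + real (Suc n)) powr r * (1 + real (Suc n)) ^ 3) * (\<rho> * \<rho> ^ n)
          \<le> K * (2 * (real n + 2) ^ 4) * (\<rho> * \<rho> ^ n)"
        using K \<rho> le[of n] by (intro mult_right_mono mult_left_mono) auto
      then show "norm (K * (3 + real (Suc n)) powr r * (1 + real (Suc n)) ^ 3 * (2 powr (real (Suc n) * b) / 2 ^ Suc n))
        \<le> K * 2 * \<rho> * ((real n + 2) ^ 4 * \<rho> ^ n)"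
        using K \<rho> unfolding eq by (simp add: abs_mult mult_ac)
    qed
  qed
qed

lemma bounds_exist:
  assumes ab: "1 / \<alpha> < a" "a \<le> b" "b < 1"
  shows "\<exists>an bk. summable an \<and> (\<forall>n. an n \<ge> 0) \<and> bk summable_on UNIV \<and> (\<forall>k. bk k \<ge> 0) \<and>
    (\<forall>n k p q u v. p + q \<le> 3 \<longrightarrow> \<bar>u\<bar> \<le> M \<longrightarrow> a \<le> v \<longrightarrow> v \<le> b \<longrightarrow>
        \<bar>mpd p q (tm n k) (u,v)\<bar> \<le> an n * bk k)"
proof -
  define M' where "M' = \<bar>M\<bar>"
  have M': "0 \<le> M'" by (simp add: M'_def)
  have a1: "1 / \<alpha> < 1" using alpha1 by simp
  define \<eta> where "\<eta> = (1 - 1 / \<alpha>) / 2"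
  define r where "r = 1 / \<alpha> + \<eta>"
  have \<eta>: "\<eta> > 0" using a1 by (simp add: \<eta>_def)
  have a0: "0 < 1 / \<alpha>" using alpha1 by simp
  define ia where "ia = 1 / \<alpha>"
  have ia: "0 < ia" "ia < 1" using a1 a0 by (simp_all add: ia_def)
  have req: "r = ia + (1 - ia) / 2" by (simp add: r_def \<eta>_def ia_def)
  have r0: "0 \<le> r" unfolding req using ia by (simp add: field_simps)
  have r1: "r \<le> 1" unfolding req using ia by (simp add: field_simps)
  have r2: "r - 2 < -1" unfolding req using ia by (simp add: field_simps)
  note r = r0 r1 r2
  obtain Ce where Ce: "Ce > 0" "\<And>j k. \<bar>eps j k\<bar> \<le> Ce * (3 + \<bar>real_of_int j\<bar>) powr r * (3 + \<bar>real_of_int k\<bar>) powr r"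
    using eps_bound \<eta> unfolding r_def by blast
  have "\<forall>z::nat\<times>nat. \<exists>C. fst z \<le> 3 \<longrightarrow> (\<forall>x. \<forall>v\<in>{a..b}. (3 + \<bar>x\<bar>)\<^sup>2 * \<bar>mpd (fst z) (snd z) (Psi \<alpha> \<psi>) (x, v)\<bar> \<le> C)"
    using Psi_decay ab by blast
  then obtain Cf where Cf: "\<And>z. fst z \<le> 3 \<Longrightarrow> (\<forall>x. \<forall>v\<in>{a..b}. (3 + \<bar>x\<bar>)\<^sup>2 * \<bar>mpd (fst z) (snd z) (Psi \<alpha> \<psi>) (x, v)\<bar> \<le> Cf z)"
    by metis
  define Cm where "Cm = (\<Sum>p\<le>3. \<Sum>i\<le>3. \<bar>Cf (p,i)\<bar>)"
  have Cm: "(3 + \<bar>x\<bar>)\<^sup>2 * \<bar>mpd p i (Psi \<alpha> \<psi>) (x,v)\<bar> \<le> Cm"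
    if "p \<le> 3" "i \<le> 3" "a \<le> v" "v \<le> b" for p i x v
  proof -
    have "(3 + \<bar>x\<bar>)\<^sup>2 * \<bar>mpd p i (Psi \<alpha> \<psi>) (x,v)\<bar> \<le> Cf (p,i)" using Cf[of "(p,i)"] that by auto
    also have "\<dots> \<le> \<bar>Cf (p,i)\<bar>" by simp
    also have "\<dots> \<le> (\<Sum>i'\<le>3. \<bar>Cf (p,i')\<bar>)" using that by (intro member_le_sum) auto
    also have "\<dots> \<le> Cm" unfolding Cm_def using that
      by (intro member_le_sum[where i = p and f = "\<lambda>p. \<Sum>i'\<le>3. \<bar>Cf (p,i')\<bar>"]) (auto intro: sum_nonneg)
    finally show ?thesis .
  qed
  have Cm0: "0 \<le> Cm" unfolding Cm_def by (intro sum_nonneg) auto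
  define an where "an n = Ce * (Cm * (1 + M') ^ 3) * (3 + real (Suc n)) powr r * (1 + real (Suc n)) ^ 3
           * (2 powr (real (Suc n) * b) / 2 ^ Suc n)" for n
  define bk where "bk k = (3 + \<bar>real_of_int k\<bar>) powr (r - 2)" for k :: int
  show ?thesis
  proof (intro exI[of _ an] exI[of _ bk] conjI allI impI)
    show "summable an" unfolding an_def
      using alpha_sum_bound[OF ab(3) r(1,2), of "Ce * (Cm * (1 + M') ^ 3)"] Ce Cm0 M' by simp
    show "0 \<le> an n" for n unfolding an_def using Ce Cm0 M' by simp
    show "bk summable_on UNIV" unfolding bk_def by (rule summable_int_powr[OF r(3)])
    show "0 \<le> bk k" for k unfolding bk_def by simp
    fix n :: nat and k :: int and p q :: nat and u v :: real
    assume pq: "p + q \<le> 3" and u: "\<bar>u\<bar> \<le> M" and v: "a \<le> v" "v \<le> b"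
    have eq: "mpd p q (tm n k) (u,v) = DD p q n k (u,v)"
      using tm_mpd[of p q v n k u] pq v ab by simp
    have "\<bar>DD p q n k (u,v)\<bar> \<le> an n * bk k"
      unfolding an_def bk_def
      by (rule DD_bound[OF _ ab(3) M' Cm Ce(2)]) (use ab pq u v Ce M'_def in auto)
    then show "\<bar>mpd p q (tm n k) (u,v)\<bar> \<le> an n * bk k" by (simp add: eq)
  qed
qed

lemma enum_bij: "bij_betw (from_nat_into (UNIV::(nat\<times>int) set)) UNIV UNIV"
  by (rule bij_betw_from_nat_into) (auto simp: finite_prod)

definition gm :: "nat \<Rightarrow> real \<times> real \<Rightarrow> real" where
  "gm m = tm (fst (from_nat_into (UNIV::(nat\<times>int) set) m)) (snd (from_nat_into (UNIV::(nat\<times>int) set) m))"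

lemma gm_abc: "abc (1 / \<alpha>) 1 (gm m)"
  unfolding gm_def by (rule tm_abc)

lemma gm_bnd:
  assumes ab: "1 / \<alpha> < a" "a \<le> b" "b < 1"
  shows "\<exists>Bd. summable Bd \<and> (\<forall>m p q u v. p + q \<le> 3 \<longrightarrow> \<bar>u\<bar> \<le> M \<longrightarrow> a \<le> v \<longrightarrow> v \<le> b \<longrightarrow>
            \<bar>mpd p q (gm m) (u,v)\<bar> \<le> Bd m)"
proof -
  let ?e = "from_nat_into (UNIV::(nat\<times>int) set)"
  obtain an bk where an: "summable an" "\<And>n. an n \<ge> 0" and bk: "bk summable_on UNIV" "\<And>k. bk k \<ge> 0"
    and bd: "\<And>n k p q u v. p + q \<le> 3 \<Longrightarrow> \<bar>u\<bar> \<le> M \<Longrightarrow> a \<le> v \<Longrightarrow> v \<le> b \<Longrightarrow>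
        \<bar>mpd p q (tm n k) (u,v)\<bar> \<le> an n * bk k"
    using bounds_exist[OF ab, of M] by blast
  have "(\<lambda>(n,k). an n * bk k) summable_on UNIV"
    using summable_prod_nat_int[OF an bk] by simp
  then have "(\<lambda>m. (\<lambda>(n,k). an n * bk k) (?e m)) summable_on UNIV"
    using summable_on_reindex_bij_betw[OF enum_bij] by blast
  then have "summable (\<lambda>m. (\<lambda>(n,k). an n * bk k) (?e m))"
    by (rule summable_on_imp_summable)
  moreover have "\<forall>m p q u v. p + q \<le> 3 \<longrightarrow> \<bar>u\<bar> \<le> M \<longrightarrow> a \<le> v \<longrightarrow> v \<le> b \<longrightarrow>
            \<bar>mpd p q (gm m) (u,v)\<bar> \<le> (\<lambda>(n,k). an n * bk k) (?e m)"
    using bd by (auto simp: gm_def case_prod_unfold)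
  ultimately show ?thesis by blast
qed

lemma Xdot_eq:
  assumes v: "1 / \<alpha> < v" "v < 1"
  shows "Xdot \<alpha> \<psi> eps (u,v) = (\<Sum>m. gm m (u,v))"
proof -
  let ?e = "from_nat_into (UNIV::(nat\<times>int) set)"
  define h where "h = (\<lambda>(n,k). tm n k (u,v))"
  obtain an bk where an: "summable an" "\<And>n. an n \<ge> 0" and bk: "bk summable_on UNIV" "\<And>k. bk k \<ge> 0"
    and bd: "\<And>n k p q u' v'. p + q \<le> 3 \<Longrightarrow> \<bar>u'\<bar> \<le> \<bar>u\<bar> \<Longrightarrow> v \<le> v' \<Longrightarrow> v' \<le> v \<Longrightarrow>
        \<bar>mpd p q (tm n k) (u',v')\<bar> \<le> an n * bk k"
    using bounds_exist[OF v(1) order_refl v(2), of "\<bar>u\<bar>"] by blast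
  have P: "(\<lambda>(n,k). an n * bk k) summable_on UNIV"
    using summable_prod_nat_int[OF an bk] by simp
  have hs: "h summable_on UNIV"
  proof -
    have "(\<lambda>x. norm (h x)) summable_on UNIV"
    proof (rule summable_on_comparison_test[OF P])
      fix x :: "nat \<times> int"
      show "0 \<le> norm (h x)" by simp
      obtain n k where x: "x = (n,k)" by force
      show "norm (h x) \<le> (case x of (n, k) \<Rightarrow> an n * bk k)"
        using bd[of 0 0 u v n k] by (simp add: h_def x)
    qed
    then show ?thesis using summable_on_iff_abs_summable_on_real by blast
  qed
  have hs': "(\<lambda>(n,k). tm n k (u,v)) summable_on (UNIV \<times> UNIV)"
    using hs by (simp add: h_def)
  have "Xdot \<alpha> \<psi> eps (u,v) = (\<Sum>n. infsum (\<lambda>k. tm n k (u,v)) UNIV)"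
    by (simp add: Xdot_def tm_def Let_def)
  also have "\<dots> = infsum (\<lambda>n. infsum (\<lambda>k. tm n k (u,v)) UNIV) UNIV"
  proof -
    have "(\<lambda>n. infsum (\<lambda>k. tm n k (u,v)) UNIV) summable_on UNIV"
      using summable_on_Sigma_banach[OF hs'] by simp
    then show ?thesis by (intro sums_unique[symmetric] has_sum_imp_sums has_sum_infsum)
  qed
  also have "\<dots> = infsum h UNIV"
    using infsum_Sigma'_banach[OF hs'] by (simp add: h_def)
  also have "\<dots> = infsum (\<lambda>m. h (?e m)) UNIV"
    by (rule infsum_reindex_bij_betw[OF enum_bij, symmetric])
  also have "\<dots> = (\<Sum>m. h (?e m))"
  proof -
    have "(\<lambda>m. h (?e m)) summable_on UNIV"
      using summable_on_reindex_bij_betw[OF enum_bij] hs by blast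
    then show ?thesis by (intro sums_unique has_sum_imp_sums has_sum_infsum)
  qed
  also have "\<dots> = (\<Sum>m. gm m (u,v))"
    by (simp add: h_def gm_def case_prod_unfold)
  finally show ?thesis .
qed

lemma Xdot_abc: "abc (1 / \<alpha>) 1 (Xdot \<alpha> \<psi> eps)"
proof (rule ser_abc[where g = gm])
  show "abc (1 / \<alpha>) 1 (gm m)" for m by (rule gm_abc)
  show "\<exists>Bd. summable Bd \<and> (\<forall>m p q u v. p + q \<le> 3 \<longrightarrow> \<bar>u\<bar> \<le> M \<longrightarrow> a \<le> v \<longrightarrow> v \<le> b \<longrightarrow>
            \<bar>mpd p q (gm m) (u,v)\<bar> \<le> Bd m)" if "1 / \<alpha> < a" "a \<le> b" "b < 1" for M a b
    using gm_bnd[OF that] .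
  show "Xdot \<alpha> \<psi> eps (u,v) = (\<Sum>m. gm m (u,v))" if "1 / \<alpha> < v" "v < 1" for u v
    using Xdot_eq[OF that] .
qed

end


theorem mainTheorem5:
  fixes \<alpha> :: real and \<psi> :: "real \<Rightarrow> real" and eps :: "int \<Rightarrow> int \<Rightarrow> real"
  assumes alpha: "1 < \<alpha>" "\<alpha> < 2"
    and psi_C3: "C3_fun \<psi>"
    and psi_supp: "\<exists>R. \<forall>s. R < \<bar>s\<bar> \<longrightarrow> \<psi> s = 0"
    and psi_ONB: "wavelet_ONB \<psi>"
    and Psi_diff: "\<forall>p q. p < 3 \<longrightarrow> (\<forall>x v. 1 / \<alpha> < v \<and> v < 1 \<longrightarrow>
                     (\<lambda>y. mpd p q (Psi \<alpha> \<psi>) (y, v)) differentiable (at x))"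
    and Psi_diffv: "\<forall>p q. p \<le> 3 \<longrightarrow> (\<forall>x v. 1 / \<alpha> < v \<and> v < 1 \<longrightarrow>
                     (\<lambda>w. mpd p q (Psi \<alpha> \<psi>) (x, w)) differentiable (at v))"
    and Psi_cont: "\<forall>p q. p \<le> 3 \<longrightarrow>
                     continuous_on (UNIV \<times> {1 / \<alpha> <..< 1}) (mpd p q (Psi \<alpha> \<psi>))"
    and Psi_decay: "\<forall>p q a b. p \<le> 3 \<and> 1 / \<alpha> < a \<and> a \<le> b \<and> b < 1 \<longrightarrow>
                     (\<exists>C. \<forall>x. \<forall>v\<in>{a..b}. (3 + \<bar>x\<bar>)\<^sup>2 * \<bar>mpd p q (Psi \<alpha> \<psi>) (x, v)\<bar> \<le> C)"
    and eps_bound: "\<forall>\<eta>>0. \<exists>C>0. \<forall>j k. \<bar>eps j k\<bar> \<le>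
                     C * (3 + \<bar>real_of_int j\<bar>) powr (1 / \<alpha> + \<eta>) * (3 + \<bar>real_of_int k\<bar>) powr (1 / \<alpha> + \<eta>)"
  shows "C3_on2 (UNIV \<times> {1 / \<alpha> <..< 1}) (Xdot \<alpha> \<psi> eps)
       \<and> (\<forall>M a b. 0 < M \<and> 1 / \<alpha> < a \<and> a < b \<and> b < 1 \<longrightarrow>
            bdd_above {\<bar>Xdot \<alpha> \<psi> eps (u1, v1) - Xdot \<alpha> \<psi> eps (u2, v2)\<bar> / (\<bar>u1 - u2\<bar> + \<bar>v1 - v2\<bar>)
                       | u1 u2 v1 v2. u1 \<in> {-M..M} \<and> u2 \<in> {-M..M} \<and> v1 \<in> {a..b} \<and> v2 \<in> {a..b}})
       \<and> (\<forall>M a b. 0 < M \<and> 1 / \<alpha> < a \<and> a < b \<and> b < 1 \<longrightarrow>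
            bdd_above {\<bar>Xdot \<alpha> \<psi> eps (u1, v) - Xdot \<alpha> \<psi> eps (u2, v)\<bar> / \<bar>u1 - u2\<bar>
                       | u1 u2 v. u1 \<in> {-M..M} \<and> u2 \<in> {-M..M} \<and> v \<in> {a..b}})"
proof -
  have abc: "abc (1 / \<alpha>) 1 (Xdot \<alpha> \<psi> eps)"
    by (rule Xdot_abc[OF Psi_diff Psi_diffv Psi_cont alpha(1) Psi_decay eps_bound])
  have C3: "C3_on2 (UNIV \<times> {1 / \<alpha> <..< 1}) (Xdot \<alpha> \<psi> eps)"
    by (rule abc_C3[OF abc])
  have L1: "bdd_above {\<bar>Xdot \<alpha> \<psi> eps (u1, v1) - Xdot \<alpha> \<psi> eps (u2, v2)\<bar> / (\<bar>u1 - u2\<bar> + \<bar>v1 - v2\<bar>)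
                       | u1 u2 v1 v2. u1 \<in> {-M..M} \<and> u2 \<in> {-M..M} \<and> v1 \<in> {a..b} \<and> v2 \<in> {a..b}}"
    if "0 < M \<and> 1 / \<alpha> < a \<and> a < b \<and> b < 1" for M a b
  proof -
    have h: "1 / \<alpha> < a" "b < 1" using that by auto
    obtain L where L0: "L \<ge> 0" and L: "\<forall>u1 u2 v1 v2. u1 \<in> {-M..M} \<longrightarrow> u2 \<in> {-M..M} \<longrightarrow> v1 \<in> {a..b} \<longrightarrow> v2 \<in> {a..b} \<longrightarrow>
       \<bar>Xdot \<alpha> \<psi> eps (u1,v1) - Xdot \<alpha> \<psi> eps (u2,v2)\<bar> \<le> L * (\<bar>u1 - u2\<bar> + \<bar>v1 - v2\<bar>)"
      using abc_lip[OF abc h(1) h(2), of M] by blast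
    show ?thesis
    proof (rule bdd_aboveI[of _ L])
      fix x assume "x \<in> {\<bar>Xdot \<alpha> \<psi> eps (u1, v1) - Xdot \<alpha> \<psi> eps (u2, v2)\<bar> / (\<bar>u1 - u2\<bar> + \<bar>v1 - v2\<bar>)
                       | u1 u2 v1 v2. u1 \<in> {-M..M} \<and> u2 \<in> {-M..M} \<and> v1 \<in> {a..b} \<and> v2 \<in> {a..b}}"
      then obtain u1 u2 v1 v2 where x: "x = \<bar>Xdot \<alpha> \<psi> eps (u1, v1) - Xdot \<alpha> \<psi> eps (u2, v2)\<bar> / (\<bar>u1 - u2\<bar> + \<bar>v1 - v2\<bar>)"
        and m: "u1 \<in> {-M..M}" "u2 \<in> {-M..M}" "v1 \<in> {a..b}" "v2 \<in> {a..b}"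
        by blast
      show "x \<le> L" unfolding x
        by (rule quot_le) (use L m L0 in auto)
    qed
  qed
  have L2: "bdd_above {\<bar>Xdot \<alpha> \<psi> eps (u1, v) - Xdot \<alpha> \<psi> eps (u2, v)\<bar> / \<bar>u1 - u2\<bar>
                       | u1 u2 v. u1 \<in> {-M..M} \<and> u2 \<in> {-M..M} \<and> v \<in> {a..b}}"
    if "0 < M \<and> 1 / \<alpha> < a \<and> a < b \<and> b < 1" for M a b
  proof -
    have h: "1 / \<alpha> < a" "b < 1" using that by auto
    obtain L where L0: "L \<ge> 0" and L: "\<forall>u1 u2 v1 v2. u1 \<in> {-M..M} \<longrightarrow> u2 \<in> {-M..M} \<longrightarrow> v1 \<in> {a..b} \<longrightarrow> v2 \<in> {a..b} \<longrightarrow>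
       \<bar>Xdot \<alpha> \<psi> eps (u1,v1) - Xdot \<alpha> \<psi> eps (u2,v2)\<bar> \<le> L * (\<bar>u1 - u2\<bar> + \<bar>v1 - v2\<bar>)"
      using abc_lip[OF abc h(1) h(2), of M] by blast
    show ?thesis
    proof (rule bdd_aboveI[of _ L])
      fix x assume "x \<in> {\<bar>Xdot \<alpha> \<psi> eps (u1, v) - Xdot \<alpha> \<psi> eps (u2, v)\<bar> / \<bar>u1 - u2\<bar>
                       | u1 u2 v. u1 \<in> {-M..M} \<and> u2 \<in> {-M..M} \<and> v \<in> {a..b}}"
      then obtain u1 u2 v where x: "x = \<bar>Xdot \<alpha> \<psi> eps (u1, v) - Xdot \<alpha> \<psi> eps (u2, v)\<bar> / \<bar>u1 - u2\<bar>"
        and m: "u1 \<in> {-M..M}" "u2 \<in> {-M..M}" "v \<in> {a..b}"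
        by blast
      have "\<bar>Xdot \<alpha> \<psi> eps (u1,v) - Xdot \<alpha> \<psi> eps (u2,v)\<bar> \<le> L * (\<bar>u1 - u2\<bar> + \<bar>v - v\<bar>)"
        using L m by blast
      then show "x \<le> L" unfolding x
        by (intro quot_le) (use L0 in auto)
    qed
  qed
  show ?thesis using C3 L1 L2 by blast
qed

end
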